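(* Let $k=\mathbb{F}_q$ with $q=2^m\geq 4$. Let $B$ be a finite set and for each $i\in B$ let $C_i\subset\mathbb{P}^2_k$ be a conic over $k$ (smooth, a double line, a union of two distinct $k$-lines, or a union of two lines conjugate over the quadratic extension of $k$). Let $\mathcal{C}=\bigcup_{i\in B}C_i$ (disjoint union indexed by $B$) with natural map $h\colon\mathcal{C}\to B$, $C_i\mapsto i$, and let $\mathcal{C}(k)=\coprod_{i\in B}C_i(k)$. Let $\sigma$ be a permutation of $\mathcal{C}(k)$ such that (1) for every $i\in B$ there is $j\in B$ with $\sigma(C_i(k))=C_j(k)$, so that $\sigma$ induces a permutation $\sigma_B=h\sigma h^{-1}$ of $B$; and (2) each such bijection $C_i(k)\to C_j(k)$ is induced by an isomorphism of conics $C_i\to C_j$ over $k$. Then $\sigma$ and $\sigma_B$ have the same parity. *)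

theory Defs
  imports "HOL-Analysis.Analysis" "HOL-Combinatorics.Permutations"
begin

definition proj_point :: "('k::field)^3 \<Rightarrow> ('k^3) set" where
  "proj_point v = {c *s v | c. c \<noteq> 0}"

text \<open>Ternary quadratic forms (written as sums of monomials x_i x_j, valid in
  every characteristic, in particular characteristic 2).\<close>
definition is_quadratic_form :: "(('k::field)^3 \<Rightarrow> 'k) \<Rightarrow> bool" where
  "is_quadratic_form Q \<longleftrightarrow>
     (\<exists>A::'k^3^3. \<forall>v. Q v = (\<Sum>i\<in>UNIV. \<Sum>j\<in>UNIV. A$i$j * v$i * v$j))"

definition is_conic :: "(('k::field)^3 \<Rightarrow> 'k) \<Rightarrow> bool" where
  "is_conic Q \<longleftrightarrow> is_quadratic_form Q \<and> Q \<noteq> (\<lambda>_. 0)"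

definition conic_points :: "(('k::field)^3 \<Rightarrow> 'k) \<Rightarrow> ('k^3) set set" where
  "conic_points Q = {proj_point v | v. v \<noteq> 0 \<and> Q v = 0}"

definition conic_iso :: "(('k::field)^3 \<Rightarrow> 'k) \<Rightarrow> ('k^3 \<Rightarrow> 'k) \<Rightarrow> 'k^3^3 \<Rightarrow> bool" where
  "conic_iso Q Q' M \<longleftrightarrow> invertible M \<and> (\<exists>c. c \<noteq> 0 \<and> (\<forall>v. Q' (M *v v) = c * Q v))"

definition induced_perm ::
  "'b set \<Rightarrow> ('b \<Rightarrow> ('k::field)^3 \<Rightarrow> 'k) \<Rightarrow> ('b \<times> ('k^3) set \<Rightarrow> 'b \<times> ('k^3) set) \<Rightarrow> 'b \<Rightarrow> 'b" where
  "induced_perm B Q \<sigma> i =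
     (if i \<in> B then fst (\<sigma> (i, SOME P. P \<in> conic_points (Q i))) else i)"

end

theory Submission
  imports Defs
begin


lemma perm_of_permutes: "p permutes S \<Longrightarrow> finite S \<Longrightarrow> permutation p"
  using permutation_permutes by blast

lemma transfer_evenperm_aux:
  assumes fin: "finite S" and inj: "inj_on \<phi> S" and pS: "p permutes S"
  shows "\<forall>p'. p' permutes (\<phi> ` S) \<and> (\<forall>x\<in>S. p' (\<phi> x) = \<phi> (p x)) \<longrightarrow> evenperm p' = evenperm p"
  using pS fin
proof (induction p rule: permutes_induct)
  case id
  show ?case
  proof (intro allI impI)
    fix p' assume h: "p' permutes (\<phi> ` S) \<and> (\<forall>x\<in>S. p' (\<phi> x) = \<phi> (id x))"
    have "p' = id"
    proof
      fix y show "p' y = id y"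
        using h by (cases "y \<in> \<phi> ` S") (auto simp: permutes_def)
    qed
    then show "evenperm p' = evenperm id" by simp
  qed
next
  case (swap a b p)
  show ?case
  proof (intro allI impI)
    fix p' assume h: "p' permutes (\<phi> ` S) \<and> (\<forall>x\<in>S. p' (\<phi> x) = \<phi> ((Transposition.transpose a b \<circ> p) x))"
    define p0 where "p0 = Transposition.transpose (\<phi> a) (\<phi> b) \<circ> p'"
    have ab: "\<phi> a \<noteq> \<phi> b" using swap inj by (meson inj_on_contraD)
    have tp: "Transposition.transpose (\<phi> a) (\<phi> b) (\<phi> y) = \<phi> (Transposition.transpose a b y)" if "y \<in> S" for y
      using that swap(1,2) inj by (auto simp: Transposition.transpose_def inj_on_eq_iff)
    have pyS: "p y \<in> S" if "y \<in> S" for y using swap(4) that by (simp add: permutes_in_image)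
    have p0perm: "p0 permutes (\<phi> ` S)" unfolding p0_def
      by (rule permutes_compose[OF _ permutes_swap_id]) (use h swap in auto)
    have "\<forall>x\<in>S. p0 (\<phi> x) = \<phi> (p x)"
    proof
      fix x assume x: "x \<in> S"
      have "p0 (\<phi> x) = Transposition.transpose (\<phi> a) (\<phi> b) (\<phi> (Transposition.transpose a b (p x)))"
        using h x by (simp add: p0_def)
      also have "\<dots> = \<phi> (Transposition.transpose a b (Transposition.transpose a b (p x)))"
        using tp[of "Transposition.transpose a b (p x)"] pyS[OF x] swap(1,2)
        by (simp add: Transposition.transpose_def split: if_splits)
      finally show "p0 (\<phi> x) = \<phi> (p x)" by simp
    qed
    then have e0: "evenperm p0 = evenperm p" using swap(5) p0perm by blast
    have fin': "finite (\<phi> ` S)" using fin by simp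
    have "p' = Transposition.transpose (\<phi> a) (\<phi> b) \<circ> p0" by (simp add: p0_def o_assoc)
    then have "evenperm p' = (evenperm (Transposition.transpose (\<phi> a) (\<phi> b)) = evenperm p0)"
      using evenperm_comp[OF permutation_swap_id perm_of_permutes[OF p0perm fin']] by simp
    also have "\<dots> = (\<not> evenperm p)" using ab e0 by (simp add: evenperm_swap)
    also have "\<dots> = evenperm (Transposition.transpose a b \<circ> p)"
      using evenperm_comp[OF permutation_swap_id perm_of_permutes[OF swap(4) fin]] swap(3)
      by (simp add: evenperm_swap)
    finally show "evenperm p' = evenperm (Transposition.transpose a b \<circ> p)" .
  qed
qed

lemma transfer_evenperm:
  assumes fin: "finite S" and inj: "inj_on \<phi> S" and img: "p ` S \<subseteq> S"
    and out: "\<And>x. x \<notin> S \<Longrightarrow> p x = x"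
    and p': "p' permutes (\<phi> ` S)" and eq: "\<And>x. x \<in> S \<Longrightarrow> p' (\<phi> x) = \<phi> (p x)"
  shows "p permutes S" "evenperm p' = evenperm p"
proof -
  have "inj_on p S"
  proof (rule inj_onI)
    fix x y assume xy: "x \<in> S" "y \<in> S" "p x = p y"
    then have "p' (\<phi> x) = p' (\<phi> y)" using eq by simp
    then have "\<phi> x = \<phi> y" using p' by (metis permutes_inj injD)
    then show "x = y" using inj xy by (meson inj_onD)
  qed
  then have "p ` S = S" using fin img by (simp add: endo_inj_surj)
  then have "bij_betw p S S" using \<open>inj_on p S\<close> by (simp add: bij_betw_def)
  then show pS: "p permutes S" using out by (rule bij_imp_permutes)
  show "evenperm p' = evenperm p"
    using transfer_evenperm_aux[OF fin inj pS] p' eq by blast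
qed

lemma swap_pairs:
  assumes "finite A" and "inj_on f A" and "f ` A \<inter> A = {}"
  shows "\<exists>\<psi>. \<psi> permutes (A \<union> f ` A) \<and> evenperm \<psi> = even (card A) \<and>
           (\<forall>x\<in>A. \<psi> x = f x \<and> \<psi> (f x) = x)"
  using assms
proof (induction A rule: finite_induct)
  case empty
  show ?case by (intro exI[of _ id]) (auto simp: permutes_id)
next
  case (insert a A)
  have injA: "inj_on f A" and disA: "f ` A \<inter> A = {}" using insert.prems by auto
  obtain \<psi> where \<psi>: "\<psi> permutes (A \<union> f ` A)" "evenperm \<psi> = even (card A)"
     "\<forall>x\<in>A. \<psi> x = f x \<and> \<psi> (f x) = x" using insert.IH[OF injA disA] by blast
  have fa1: "f a \<noteq> a" using insert.prems by auto
  have fa2: "f a \<notin> A" using insert.prems by auto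
  have fa3: "f a \<notin> f ` A" using insert.prems insert.hyps by (auto simp: inj_on_def)
  have a3: "a \<notin> f ` A" using insert.prems by auto
  define \<psi>' where "\<psi>' = Transposition.transpose a (f a) \<circ> \<psi>"
  have fin: "finite (A \<union> f ` A)" using insert by simp
  have p1: "\<psi>' permutes (insert a A \<union> f ` insert a A)" unfolding \<psi>'_def
    apply (rule permutes_compose)
     apply (rule permutes_subset[OF \<psi>(1)]) apply blast
    apply (rule permutes_swap_id) apply auto done
  have "evenperm \<psi>' = (evenperm (Transposition.transpose a (f a)) = evenperm \<psi>)"
    unfolding \<psi>'_def by (rule evenperm_comp[OF permutation_swap_id perm_of_permutes[OF \<psi>(1) fin]])
  also have "\<dots> = even (card (insert a A))" using fa1 \<psi>(2) insert.hyps by (simp add: evenperm_swap)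
  finally have p2: "evenperm \<psi>' = even (card (insert a A))" .
  have pa: "\<psi> a = a" using \<psi>(1) insert.hyps a3 by (auto simp: permutes_def)
  have pfa: "\<psi> (f a) = f a" using \<psi>(1) fa2 fa3 by (auto simp: permutes_def)
  have p3: "\<forall>x\<in>insert a A. \<psi>' x = f x \<and> \<psi>' (f x) = x"
  proof
    fix x assume x: "x \<in> insert a A"
    show "\<psi>' x = f x \<and> \<psi>' (f x) = x"
    proof (cases "x = a")
      case True then show ?thesis using pa pfa by (simp add: \<psi>'_def)
    next
      case False
      then have xA: "x \<in> A" using x by simp
      have "f x \<noteq> a" using insert.prems x by auto
      moreover have "f x \<noteq> f a" using insert.prems x False by (auto simp: inj_on_def)
      moreover have "x \<noteq> f a" using fa2 xA by auto
      ultimately show ?thesis using \<psi>(3) xA False by (simp add: \<psi>'_def Transposition.transpose_def)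
    qed
  qed
  show ?case using p1 p2 p3 by blast
qed


lemma involution_perm:
  assumes "finite S" "p permutes S" "\<And>x. p (p x) = x"
  shows "even (card {x. p x \<noteq> x}) \<and> evenperm p = even (card {x. p x \<noteq> x} div 2)"
  using assms
proof (induction "card {x. p x \<noteq> x}" arbitrary: p rule: less_induct)
  case less
  note pp = less.prems(3)
  show ?case
  proof (cases "{x. p x \<noteq> x} = {}")
    case True
    then have "p = id" by (auto simp: fun_eq_iff)
    then show ?thesis by simp
  next
    case False
    then obtain x where x: "p x \<noteq> x" by auto
    define p' where "p' = Transposition.transpose x (p x) \<circ> p"
    have sub0: "{x. p x \<noteq> x} \<subseteq> S" using less.prems(2) by (auto simp: permutes_def)
    have finM: "finite {x. p x \<noteq> x}" using finite_subset[OF sub0 less.prems(1)] .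
    have px: "p (p x) = x" by (rule pp)
    have M': "{y. p' y \<noteq> y} = {y. p y \<noteq> y} - {x, p x}"
    proof (rule set_eqI)
      fix y
      show "y \<in> {y. p' y \<noteq> y} \<longleftrightarrow> y \<in> {y. p y \<noteq> y} - {x, p x}"
      proof (cases "y = x \<or> y = p x")
        case True then show ?thesis using px x by (auto simp: p'_def)
      next
        case False
        then have "p y \<noteq> x" "p y \<noteq> p x" using False by (metis pp)+
        then show ?thesis using False by (simp add: p'_def)
      qed
    qed
    have sub: "{x, p x} \<subseteq> {y. p y \<noteq> y}" using x px by auto
    have cM: "card {y. p' y \<noteq> y} = card {y. p y \<noteq> y} - 2"
      using M' sub finM x by (simp add: card_Diff_subset)
    have c2: "card {y. p y \<noteq> y} \<ge> 2" using card_mono[OF finM sub] x by simp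
    have xS: "x \<in> S" "p x \<in> S" using sub sub0 by auto
    have p'S: "p' permutes S" unfolding p'_def
      by (rule permutes_compose[OF less.prems(2) permutes_swap_id]) (use xS in auto)
    have inv': "p' (p' y) = y" for y
    proof (cases "y = x \<or> y = p x")
      case True then show ?thesis using px x by (auto simp: p'_def)
    next
      case False
      then have "p y \<noteq> x" "p y \<noteq> p x" using False by (metis pp)+
      then show ?thesis using False pp[of y] by (simp add: p'_def)
    qed
    have lt: "card {y. p' y \<noteq> y} < card {y. p y \<noteq> y}" using cM c2 by simp
    have IH: "even (card {x. p' x \<noteq> x}) \<and> evenperm p' = even (card {x. p' x \<noteq> x} div 2)"
      using less.hyps[OF lt less.prems(1) p'S inv'] .
    have ppe: "p = Transposition.transpose x (p x) \<circ> p'" by (simp add: p'_def o_assoc)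
    have "evenperm p = (evenperm (Transposition.transpose x (p x)) = evenperm p')"
      by (subst ppe, rule evenperm_comp[OF permutation_swap_id perm_of_permutes[OF p'S less.prems(1)]])
    then have ep: "evenperm p = (\<not> evenperm p')" using x by (simp add: evenperm_swap)
    define n where "n = card {y. p y \<noteq> y}"
    have n2: "n \<ge> 2" and cn: "card {y. p' y \<noteq> y} = n - 2" using c2 cM by (auto simp: n_def)
    have "even n = even (n - 2)" using n2 by simp
    moreover have "even (n div 2) = (\<not> even ((n - 2) div 2))"
    proof -
      obtain k where "n = k + 2" using n2 by (metis le_add_diff_inverse2)
      then show ?thesis by simp
    qed
    ultimately show ?thesis using IH ep cn n_def by simp
  qed
qed


lemma char2_from_card:
  assumes "CARD('k::{field,finite}) = 2 ^ m" "2 ^ m \<ge> (4::nat)"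
  shows "(1::'k) + 1 = 0"
proof (rule ccontr)
  assume ne: "(1::'k) + 1 \<noteq> 0"
  have pu: "(uminus :: 'k \<Rightarrow> 'k) permutes UNIV"
    by (rule bij_imp_permutes) (auto intro: o_bij[of uminus uminus] simp: fun_eq_iff)
  have "even (card {x::'k. - x \<noteq> x})" using involution_perm[OF _ pu] by simp
  moreover have "{x::'k. - x \<noteq> x} = UNIV - {0}"
  proof -
    have "- x = x \<longleftrightarrow> x = 0" for x :: 'k
    proof
      assume "- x = x" then have "x * (1 + 1) = 0" by (simp add: algebra_simps)
      then show "x = 0" using ne by simp
    qed simp
    then show ?thesis by auto
  qed
  moreover have "card (UNIV - {0::'k}) = 2 ^ m - 1" using assms(1) by (simp add: card_Diff_subset)
  moreover have "odd (2 ^ m - 1 :: nat)" using assms(2)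
  proof -
    have "m \<noteq> 0" using assms(2) by (rule_tac ccontr) auto
    then have "even (2 ^ m :: nat)" by simp
    moreover have "(2::nat) ^ m \<ge> 1" by simp
    ultimately show ?thesis by (simp add: even_diff_nat)
  qed
  ultimately show False by simp
qed

lemma four_dvd_card:
  assumes "CARD('k::{field,finite}) = 2 ^ m" "2 ^ m \<ge> (4::nat)"
  shows "4 dvd CARD('k)"
proof -
  have "m \<ge> 2"
  proof (rule ccontr)
    assume "\<not> m \<ge> 2" then have "m = 0 \<or> m = 1" by auto
    then show False using assms(2) by auto
  qed
  then obtain j where "m = j + 2" by (metis le_add_diff_inverse2)
  then show ?thesis using assms(1) by (simp add: power_add)
qed

definition inv_opt :: "'a::field option \<Rightarrow> 'a option" where
  "inv_opt z = (case z of None \<Rightarrow> Some 0 | Some x \<Rightarrow> if x = 0 then None else Some (inverse x))"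

lemma inv_opt_inv: "inv_opt (inv_opt z) = z"
  by (cases z) (auto simp: inv_opt_def)

locale c2f =
  fixes dummy :: "'k::{field,finite} itself"
  assumes two: "(1::'k) + 1 = 0" and four: "4 dvd CARD('k)"

context c2f
begin

lemma c2_add_self[simp]: "(x::'k) + x = 0"
proof -
  have "x + x = x * (1 + 1)" by (simp add: algebra_simps)
  then show ?thesis using two by simp
qed

lemma c2_minus[simp]: "- (x::'k) = x"
  using c2_add_self[of x] by (metis add_eq_0_iff)

lemma c2_diff[simp]: "(x::'k) - y = x + y"
  by (metis c2_minus diff_minus_eq_add)

lemma c2_two[simp]: "(2::'k) = 0"
  by (metis one_add_one two)

lemma c2_add_eq0: "((x::'k) + y = 0) = (x = y)"
  by (metis add_right_cancel c2_add_self)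

lemma sq_inj: "(x::'k) * x = y * y \<Longrightarrow> x = y"
proof -
  assume h: "x * x = y * y"
  have "(x + y) * (x + y) = x * x + y * y + (x * y + x * y)" by algebra
  also have "\<dots> = x * x + y * y" by simp
  also have "\<dots> = 0" using h by simp
  finally have "x + y = 0" by simp
  then show "x = y" by (metis add_right_cancel c2_add_self)
qed

lemma sq_surj: "\<exists>s::'k. s * s = a"
proof -
  have "inj (\<lambda>x::'k. x * x)" by (auto intro: injI sq_inj)
  then have "surj (\<lambda>x::'k. x * x)" by (simp add: finite_UNIV_inj_surj)
  then have "a \<in> range (\<lambda>x::'k. x * x)" by simp
  then show ?thesis by (auto simp: eq_commute)
qed

lemma card_even: "even CARD('k)" using four by (metis dvd_trans even_numeral)

lemma evenperm_comp_even:
  assumes "p permutes UNIV" "q permutes UNIV" "evenperm p" "evenperm q"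
  shows "(p \<circ> q) permutes (UNIV :: 'a::finite set) \<and> evenperm (p \<circ> q)"
  using assms evenperm_comp[of p q] permutes_compose[of q UNIV p]
  by (simp add: perm_of_permutes)

lemma shift_perm: "(\<lambda>x::'k. x + b) permutes UNIV"
  by (rule bij_imp_permutes) (auto intro: o_bij[of "\<lambda>x. x + b" "\<lambda>x. x + b"] simp: fun_eq_iff add.assoc)

lemma shift_even: "evenperm (\<lambda>x::'k. x + b)"
proof (cases "b = 0")
  case True then show ?thesis by simp
next
  case False
  have inv: "(x + b) + b = x" for x :: 'k by (simp add: add.assoc)
  have "{x::'k. x + b \<noteq> x} = UNIV" using False by auto
  moreover obtain j where "CARD('k) = 4 * j" using four by (auto elim: dvdE)
  ultimately show ?thesis using involution_perm[OF _ shift_perm inv]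
    by simp
qed

lemma scale_perm: "(a::'k) \<noteq> 0 \<Longrightarrow> (\<lambda>x::'k. a * x) permutes UNIV"
  by (rule bij_imp_permutes) (auto intro: o_bij[of "\<lambda>x. x / a" "\<lambda>x. a * x"] simp: fun_eq_iff)

lemma scale_even: "(a::'k) \<noteq> 0 \<Longrightarrow> evenperm (\<lambda>x::'k. a * x)"
proof -
  assume a: "a \<noteq> 0"
  obtain s where s: "s * s = a" using sq_surj by blast
  then have s0: "s \<noteq> 0" using a by auto
  have eq: "(\<lambda>x::'k. a * x) = (\<lambda>x. s * x) \<circ> (\<lambda>x. s * x)" using s by (auto simp: fun_eq_iff mult.assoc)
  have e: "evenperm ((\<lambda>x::'k. s * x) \<circ> (\<lambda>x. s * x))"
    using evenperm_comp[OF perm_of_permutes[OF scale_perm[OF s0]] perm_of_permutes[OF scale_perm[OF s0]]]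
    by simp
  show ?thesis using e eq by metis
qed

lemma affine_perm_even:
  assumes "(a::'k) \<noteq> 0"
  shows "(\<lambda>x. a * x + b) permutes UNIV \<and> evenperm (\<lambda>x. a * x + b)"
proof -
  have "(\<lambda>x. a * x + b) = (\<lambda>x. x + b) \<circ> (\<lambda>x. a * x)" by auto
  then show ?thesis using evenperm_comp_even[OF shift_perm scale_perm[OF assms] shift_even scale_even[OF assms]]
    by simp
qed

lemma option_lift:
  assumes "f permutes (UNIV::'k set)" "evenperm f"
  shows "map_option f permutes UNIV" "evenperm (map_option f)"
proof -
  have "map_option f permutes (Some ` UNIV)"
  proof (rule bij_imp_permutes)
    have "inj f" using assms(1) permutes_inj by blast
    moreover have "surj f" using assms(1) permutes_surj by blast
    ultimately show "bij_betw (map_option f) (range Some) (range Some)"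
      by (auto simp: bij_betw_def inj_on_def image_iff) (metis surjD)
  next
    fix x :: "'k option" assume "x \<notin> range Some" then show "map_option f x = x" by (cases x) auto
  qed
  then have tr: "f permutes UNIV" "evenperm (map_option f) = evenperm f"
    using transfer_evenperm[of UNIV Some f "map_option f"] by auto
  show "map_option f permutes UNIV" using \<open>map_option f permutes (Some ` UNIV)\<close>
    by (metis permutes_subset subset_UNIV)
  show "evenperm (map_option f)" using tr assms by simp
qed

lemma inv_opt_perm: "(inv_opt :: 'k option \<Rightarrow> _) permutes UNIV"
  by (rule bij_imp_permutes) (auto intro: o_bij[of inv_opt inv_opt] simp: fun_eq_iff inv_opt_inv)

lemma inv_opt_even: "evenperm (inv_opt :: 'k option \<Rightarrow> _)"
proof -
  have "{z::'k option. inv_opt z \<noteq> z} = UNIV - {Some 1}"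
  proof -
    have "inv_opt z = z \<longleftrightarrow> z = Some 1" for z :: "'k option"
    proof (cases z)
      case (Some x)
      have "x = 1" if "x \<noteq> 0" "inverse x = x"
      proof -
        have "x * inverse x = 1" using that(1) by simp
        then have "x * x = 1 * 1" using that(2) by simp
        then show ?thesis by (rule sq_inj)
      qed
      then show ?thesis using Some by (auto simp: inv_opt_def)
    qed (auto simp: inv_opt_def)
    then show ?thesis by auto
  qed
  moreover have "card (UNIV - {Some (1::'k)}) = CARD('k)"
    by (simp add: card_Diff_subset card_UNIV_option)
  moreover obtain j where "CARD('k) = 4 * j" using four by (auto elim: dvdE)
  ultimately show ?thesis using involution_perm[OF _ inv_opt_perm inv_opt_inv]
    by simp
qed

end


definition pt :: "'a::field \<Rightarrow> 'a \<Rightarrow> 'a option" where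
  "pt x y = (if y = 0 then None else Some (x / y))"

definition rep :: "'a::field option \<Rightarrow> 'a \<times> 'a" where
  "rep z = (case z of None \<Rightarrow> (1, 0) | Some t \<Rightarrow> (t, 1))"

definition mob :: "'a::field \<Rightarrow> 'a \<Rightarrow> 'a \<Rightarrow> 'a \<Rightarrow> 'a option \<Rightarrow> 'a option" where
  "mob a b c d z = (case z of None \<Rightarrow> if c = 0 then None else Some (a / c)
      | Some x \<Rightarrow> if c * x + d = 0 then None else Some ((a * x + b) / (c * x + d)))"

lemma pt_rep[simp]: "pt (fst (rep z)) (snd (rep z)) = z"
  by (cases z) (auto simp: pt_def rep_def)

lemma rep_nz: "rep z \<noteq> (0, 0)"
  by (cases z) (auto simp: rep_def)

lemma rep_nz': "fst (rep z) = 0 \<Longrightarrow> snd (rep z) = 0 \<Longrightarrow> False"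
  by (cases z) (auto simp: rep_def)

lemma pt_scale: "(\<mu>::'a::field) \<noteq> 0 \<Longrightarrow> pt (\<mu> * x) (\<mu> * y) = pt x y"
  by (auto simp: pt_def)

lemma rep_pt:
  assumes "(x::'a::field, y) \<noteq> (0, 0)"
  shows "\<exists>\<mu>. \<mu> \<noteq> 0 \<and> x = \<mu> * fst (rep (pt x y)) \<and> y = \<mu> * snd (rep (pt x y))"
proof (cases "y = 0")
  case True
  then show ?thesis using assms by (intro exI[of _ x]) (auto simp: pt_def rep_def)
next
  case False
  then show ?thesis by (intro exI[of _ y]) (auto simp: pt_def rep_def)
qed

lemma pt_eq:
  assumes "(x::'a::field, y) \<noteq> (0, 0)" "(x', y') \<noteq> (0, 0)" "pt x y = pt x' y'"
  shows "\<exists>\<mu>. \<mu> \<noteq> 0 \<and> x' = \<mu> * x \<and> y' = \<mu> * y"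
proof -
  obtain \<mu> where m: "\<mu> \<noteq> 0" "x = \<mu> * fst (rep (pt x y))" "y = \<mu> * snd (rep (pt x y))"
    using rep_pt[OF assms(1)] by blast
  obtain \<nu> where n: "\<nu> \<noteq> 0" "x' = \<nu> * fst (rep (pt x' y'))" "y' = \<nu> * snd (rep (pt x' y'))"
    using rep_pt[OF assms(2)] by blast
  show ?thesis
    by (rule exI[of _ "\<nu> / \<mu>"]) (use m n assms(3) in auto)
qed

lemma pt_zero_iff: "pt x y = pt x' y' \<Longrightarrow> (x::'a::field, y) \<noteq> (0,0) \<Longrightarrow> (x', y') \<noteq> (0, 0) \<Longrightarrow> True"
  by simp

lemma mob_pt:
  assumes "(x::'a::field, y) \<noteq> (0, 0)"
  shows "mob a b c d (pt x y) = pt (a * x + b * y) (c * x + d * y)"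
proof (cases "y = 0")
  case True
  then have "x \<noteq> 0" using assms by simp
  then show ?thesis using True by (auto simp: mob_def pt_def)
next
  case False
  have e1: "c * x / y + d = (c * x + d * y) / y" using False by (simp add: field_simps)
  have e2: "a * x / y + b = (a * x + b * y) / y" using False by (simp add: field_simps)
  show ?thesis using False by (auto simp: mob_def pt_def e1 e2)
qed

lemma ker2:
  assumes "(a::'a::field) * d = b * c"
  shows "\<exists>x y. (x, y) \<noteq> (0, 0) \<and> a * x + b * y = 0 \<and> c * x + d * y = 0"
proof (cases "(a, b) = (0, 0)")
  case False
  then show ?thesis using assms
    by (intro exI[of _ b] exI[of _ "- a"]) (auto simp: algebra_simps)
next
  case True
  show ?thesis
  proof (cases "(d, c) = (0, 0)")
    case False
    then show ?thesis using True
      by (intro exI[of _ d] exI[of _ "- c"]) (auto simp: algebra_simps)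
  next
    case True2: True
    then show ?thesis using True by (intro exI[of _ 1] exI[of _ 0]) auto
  qed
qed

lemma mob_decomp1:
  assumes "(c::'a::field) = 0" "d \<noteq> 0"
  shows "mob a b c d = map_option (\<lambda>x. x + b / d) \<circ> map_option (\<lambda>x. (a / d) * x)"
proof
  fix z show "mob a b c d z = (map_option (\<lambda>x. x + b / d) \<circ> map_option (\<lambda>x. (a / d) * x)) z"
    using assms by (cases z) (auto simp: mob_def field_simps)
qed

lemma mob_decomp2:
  assumes "(c::'a::field) \<noteq> 0"
  shows "mob a b c d = map_option (\<lambda>x. x + a / c) \<circ> map_option (\<lambda>x. ((b * c - a * d) / c) * x)
      \<circ> inv_opt \<circ> map_option (\<lambda>x. x + d) \<circ> map_option (\<lambda>x. c * x)"
proof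
  fix z
  show "mob a b c d z = (map_option (\<lambda>x. x + a / c) \<circ> map_option (\<lambda>x. ((b * c - a * d) / c) * x)
      \<circ> inv_opt \<circ> map_option (\<lambda>x. x + d) \<circ> map_option (\<lambda>x. c * x)) z"
  proof (cases z)
    case None then show ?thesis using assms by (auto simp: mob_def inv_opt_def)
  next
    case (Some x)
    show ?thesis
    proof (cases "c * x + d = 0")
      case True then show ?thesis using Some by (auto simp: mob_def inv_opt_def)
    next
      case False
      have "(a * x + b) / (c * x + d) = (b * c - a * d) / c * inverse (c * x + d) + a / c"
        using False assms by (simp add: divide_simps inverse_eq_divide) (simp add: algebra_simps)
      then show ?thesis using Some False by (auto simp: mob_def inv_opt_def)
    qed
  qed
qed

context c2f begin

lemma mob_even:
  assumes "(a::'k) * d \<noteq> b * c"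
  shows "mob a b c d permutes UNIV \<and> evenperm (mob a b c d)"
proof (cases "c = 0")
  case True
  then have ad: "a \<noteq> 0" "d \<noteq> 0" using assms by auto
  note s1 = option_lift[OF shift_perm[of "b/d"] shift_even[of "b/d"]]
  have nz: "a / d \<noteq> 0" using ad by simp
  note s2 = option_lift[OF scale_perm[OF nz] scale_even[OF nz]]
  show ?thesis unfolding mob_decomp1[OF True ad(2)]
    using evenperm_comp_even[OF s1(1) s2(1) s1(2) s2(2)] .
next
  case False
  have e: "(b * c - a * d) / c \<noteq> 0" using assms False by (auto simp: c2_add_eq0)
  note s1 = option_lift[OF shift_perm[of "a/c"] shift_even[of "a/c"]]
  note s2 = option_lift[OF scale_perm[OF e] scale_even[OF e]]
  note s4 = option_lift[OF shift_perm[of d] shift_even[of d]]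
  note s5 = option_lift[OF scale_perm[OF False] scale_even[OF False]]
  note c12 = evenperm_comp_even[OF s1(1) s2(1) s1(2) s2(2)]
  note c123 = evenperm_comp_even[OF c12[THEN conjunct1] inv_opt_perm c12[THEN conjunct2] inv_opt_even]
  note c1234 = evenperm_comp_even[OF c123[THEN conjunct1] s4(1) c123[THEN conjunct2] s4(2)]
  note c12345 = evenperm_comp_even[OF c1234[THEN conjunct1] s5(1) c1234[THEN conjunct2] s5(2)]
  show ?thesis unfolding mob_decomp2[OF False] using c12345 .
qed

end


type_synonym 'k v3 = "'k^3"

lemma pp_mem: "(v::'k::field^3) \<in> proj_point v"
  unfolding proj_point_def by (auto intro: exI[of _ 1])

lemma pp_memD: "w \<in> proj_point (v::'k::field^3) \<Longrightarrow> \<exists>c. c \<noteq> 0 \<and> w = c *s v"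
  unfolding proj_point_def by auto

lemma pp_scale: "(c::'k::field) \<noteq> 0 \<Longrightarrow> proj_point (c *s v) = proj_point v"
proof -
  assume c: "c \<noteq> 0"
  have 1: "d *s (c *s v) = (d * c) *s v" for d by (simp add: vector_smult_assoc)
  have 2: "d *s v = (d / c) *s (c *s v)" for d using c by (simp add: vector_smult_assoc)
  show ?thesis unfolding proj_point_def
  proof (rule set_eqI, rule iffI)
    fix w assume "w \<in> {d *s (c *s v) |d. d \<noteq> 0}"
    then obtain d where "d \<noteq> 0" "w = d *s (c *s v)" by auto
    then show "w \<in> {d *s v |d. d \<noteq> 0}" using 1 c by auto
  next
    fix w assume "w \<in> {d *s v |d. d \<noteq> 0}"
    then obtain d where "d \<noteq> 0" "w = d *s v" by auto
    moreover have "w = (d / c) *s (c *s v)" using 2[of d] \<open>w = d *s v\<close> by simp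
    moreover have "d / c \<noteq> 0" using c \<open>d \<noteq> 0\<close> by simp
    ultimately show "w \<in> {d *s (c *s v) |d. d \<noteq> 0}" by blast
  qed
qed

lemma pp_eq_iff: "proj_point (v::'k::field^3) = proj_point w \<longleftrightarrow> (\<exists>c. c \<noteq> 0 \<and> w = c *s v)"
proof
  assume "proj_point v = proj_point w"
  then have "w \<in> proj_point v" using pp_mem[of w] by simp
  then show "\<exists>c. c \<noteq> 0 \<and> w = c *s v" by (rule pp_memD)
next
  assume "\<exists>c. c \<noteq> 0 \<and> w = c *s v"
  then show "proj_point v = proj_point w" using pp_scale by metis
qed

lemma pp_image: "(\<lambda>v. M *v v) ` proj_point (v::'k::field^3) = proj_point (M *v v)"
  unfolding proj_point_def
proof (rule set_eqI, rule iffI)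
  fix w assume "w \<in> (\<lambda>v. M *v v) ` {c *s v |c. c \<noteq> 0}"
  then show "w \<in> {c *s (M *v v) |c. c \<noteq> 0}" by (auto simp: vector_scalar_commute)
next
  fix w assume "w \<in> {c *s (M *v v) |c. c \<noteq> 0}"
  then obtain c where "c \<noteq> 0" "w = c *s (M *v v)" by auto
  then show "w \<in> (\<lambda>v. M *v v) ` {c *s v |c. c \<noteq> 0}"
    by (intro image_eqI[where x="c *s v"]) (auto simp: vector_scalar_commute)
qed

lemma pp_nonzero: "v \<noteq> 0 \<Longrightarrow> w \<in> proj_point (v::'k::field^3) \<Longrightarrow> w \<noteq> 0"
  unfolding proj_point_def by auto

lemma invertible_inj0: "invertible (M::'k::field^3^3) \<Longrightarrow> M *v w = 0 \<Longrightarrow> w = 0"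
  using inj_matrix_vector_mult[of M] by (metis injD matrix_vector_mult_0_right)

lemma qf_hom:
  assumes "is_quadratic_form Q"
  shows "Q (c *s v) = c * c * Q (v::'k::field^3)"
proof -
  obtain A where A: "\<forall>v. Q v = (\<Sum>i\<in>UNIV. \<Sum>j\<in>UNIV. A$i$j * v$i * v$j)"
    using assms unfolding is_quadratic_form_def by blast
  have "Q (c *s v) = (\<Sum>i\<in>UNIV. \<Sum>j\<in>UNIV. A$i$j * (c * v$i) * (c * v$j))" using A by simp
  also have "\<dots> = c * c * (\<Sum>i\<in>UNIV. \<Sum>j\<in>UNIV. A$i$j * v$i * v$j)"
    by (simp add: sum_distrib_left mult_ac)
  finally show ?thesis using A by simp
qed

lemma conic_points_iff:
  assumes "is_quadratic_form Q"
  shows "proj_point v \<in> conic_points Q \<longleftrightarrow> v \<noteq> 0 \<and> Q (v::'k::field^3) = 0"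
proof
  assume "proj_point v \<in> conic_points Q"
  then obtain w where w: "proj_point v = proj_point w" "w \<noteq> 0" "Q w = 0"
    unfolding conic_points_def by auto
  then obtain c where c: "c \<noteq> 0" "v = c *s w" using pp_eq_iff[of w v] by auto
  then show "v \<noteq> 0 \<and> Q v = 0" using w qf_hom[OF assms] by simp
next
  assume "v \<noteq> 0 \<and> Q v = 0" then show "proj_point v \<in> conic_points Q"
    unfolding conic_points_def by auto
qed

lemma conic_pointsE:
  assumes "P \<in> conic_points Q"
  obtains v where "P = proj_point v" "v \<noteq> 0" "Q v = 0"
  using assms unfolding conic_points_def by auto

lemma conic_iso_image:
  assumes "is_quadratic_form Q" "is_quadratic_form Q'" "conic_iso Q Q' M"
    and "P \<in> conic_points Q"
  shows "(\<lambda>v. M *v v) ` P \<in> conic_points Q'"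
proof -
  obtain v where v: "P = proj_point v" "v \<noteq> 0" "Q v = 0" using assms(4) by (rule conic_pointsE)
  obtain c where c: "invertible M" "c \<noteq> 0" "\<forall>v. Q' (M *v v) = c * Q v"
    using assms(3) unfolding conic_iso_def by blast
  have "M *v v \<noteq> 0" using invertible_inj0[OF c(1)] v by blast
  then show ?thesis using v c pp_image[of M v] conic_points_iff[OF assms(2)] by simp
qed

lemma conic_iso_inv:
  assumes "conic_iso Q Q' (M::'k::field^3^3)"
  obtains M' where "conic_iso Q' Q M'" "M' ** M = mat 1" "M ** M' = mat 1"
proof -
  obtain c where c: "invertible M" "c \<noteq> 0" "\<forall>v. Q' (M *v v) = c * Q v"
    using assms unfolding conic_iso_def by blast
  obtain M' where M': "M ** M' = mat 1" "M' ** M = mat 1" using c(1) unfolding invertible_def by blast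
  have "invertible M'" using M' unfolding invertible_def by blast
  moreover have "Q (M' *v v) = (1 / c) * Q' v" for v
  proof -
    have "Q' v = Q' (M *v (M' *v v))" by (simp add: matrix_vector_mul_assoc M')
    also have "\<dots> = c * Q (M' *v v)" using c by simp
    finally show ?thesis using c(2) by simp
  qed
  ultimately have "conic_iso Q' Q M'" unfolding conic_iso_def using c(2)
    by (intro conjI exI[of _ "1/c"]) auto
  then show ?thesis using that M' by blast
qed

lemma conic_iso_comp:
  assumes "conic_iso Q1 Q2 (M::'k::field^3^3)" "conic_iso Q2 Q3 N"
  shows "conic_iso Q1 Q3 (N ** M)"
proof -
  obtain c where c: "invertible M" "c \<noteq> 0" "\<forall>v. Q2 (M *v v) = c * Q1 v"
    using assms(1) unfolding conic_iso_def by blast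
  obtain d where d: "invertible N" "d \<noteq> 0" "\<forall>v. Q3 (N *v v) = d * Q2 v"
    using assms(2) unfolding conic_iso_def by blast
  show ?thesis unfolding conic_iso_def
    using c d invertible_mult[OF d(1) c(1)]
    by (intro conjI exI[of _ "d * c"]) (auto simp: matrix_vector_mul_assoc[symmetric])
qed

lemma conic_iso_id: "conic_iso Q Q (mat 1 :: 'k::field^3^3)"
  unfolding conic_iso_def invertible_def by (auto intro: exI[of _ 1] exI[of _ "mat 1"])

lemma conic_iso_bij:
  assumes "is_quadratic_form Q" "is_quadratic_form Q'" "conic_iso Q Q' (M::'k::field^3^3)"
  shows "bij_betw (\<lambda>P. (\<lambda>v. M *v v) ` P) (conic_points Q) (conic_points Q')"
proof -
  obtain M' where M': "conic_iso Q' Q M'" "M' ** M = mat 1" "M ** M' = mat 1"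
    using assms(3) by (rule conic_iso_inv)
  have bk: "(\<lambda>v. M' *v v) ` ((\<lambda>v. M *v v) ` P) = P" for P
    by (auto simp: image_image matrix_vector_mul_assoc M'(2))
  have fw: "(\<lambda>v. M *v v) ` ((\<lambda>v. M' *v v) ` P) = P" for P
    by (auto simp: image_image matrix_vector_mul_assoc M'(3))
  show ?thesis
  proof (rule bij_betw_byWitness[where f'="\<lambda>P. (\<lambda>v. M' *v v) ` P"])
    show "\<forall>a\<in>conic_points Q. (\<lambda>v. M' *v v) ` (\<lambda>v. M *v v) ` a = a" using bk by blast
    show "\<forall>a'\<in>conic_points Q'. (\<lambda>v. M *v v) ` (\<lambda>v. M' *v v) ` a' = a'" using fw by blast
    show "(\<lambda>P. (\<lambda>v. M *v v) ` P) ` conic_points Q \<subseteq> conic_points Q'"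
      using conic_iso_image[OF assms] by blast
    show "(\<lambda>P. (\<lambda>v. M' *v v) ` P) ` conic_points Q' \<subseteq> conic_points Q"
      using conic_iso_image[OF assms(2,1) M'(1)] by blast
  qed
qed


definition bf :: "(('k::field)^3 \<Rightarrow> 'k) \<Rightarrow> 'k^3 \<Rightarrow> 'k^3 \<Rightarrow> 'k" where
  "bf Q u v = Q (u + v) - Q u - Q v"

definition poly6 :: "'k::field \<Rightarrow> 'k \<Rightarrow> 'k \<Rightarrow> 'k \<Rightarrow> 'k \<Rightarrow> 'k \<Rightarrow> 'k^3 \<Rightarrow> 'k" where
  "poly6 a11 a22 a33 a12 a13 a23 v = a11* v$1* v$1 + a22* v$2* v$2 + a33* v$3* v$3
      + a12* v$1* v$2 + a13* v$1* v$3 + a23* v$2* v$3"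

definition ee :: "3 \<Rightarrow> 'k::field^3" where "ee i = (\<chi> j. if j = i then 1 else 0)"

lemma qf6:
  assumes "is_quadratic_form (Q::'k::field^3 \<Rightarrow> 'k)"
  shows "\<exists>a11 a22 a33 a12 a13 a23. Q = poly6 a11 a22 a33 a12 a13 a23"
proof -
  obtain A where A: "\<forall>v. Q v = (\<Sum>i\<in>UNIV. \<Sum>j\<in>UNIV. A$i$j * v$i * v$j)"
    using assms unfolding is_quadratic_form_def by blast
  have "Q = poly6 (A$1$1) (A$2$2) (A$3$3) (A$1$2 + A$2$1) (A$1$3 + A$3$1) (A$2$3 + A$3$2)"
    using A by (auto simp: fun_eq_iff poly6_def sum_3 algebra_simps)
  then show ?thesis by blast
qed

lemma Q_add: "Q (u + v) = Q u + Q v + bf Q u v"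
  by (simp add: bf_def)

context c2f begin

lemma bf_poly6:
  "bf (poly6 a11 a22 a33 a12 a13 a23) u (v::'k^3) =
     a12*(u$1* v$2 + u$2* v$1) + a13*(u$1* v$3 + u$3* v$1) + a23*(u$2* v$3 + u$3* v$2)"
proof -
  have "poly6 a11 a22 a33 a12 a13 a23 (u + v) = poly6 a11 a22 a33 a12 a13 a23 u + poly6 a11 a22 a33 a12 a13 a23 v
     + (a12*(u$1* v$2 + u$2* v$1) + a13*(u$1* v$3 + u$3* v$1) + a23*(u$2* v$3 + u$3* v$2))
     + ((a11* u$1* v$1 + a22* u$2* v$2 + a33* u$3* v$3) + (a11* u$1* v$1 + a22* u$2* v$2 + a33* u$3* v$3))"
    unfolding poly6_def by (simp add: algebra_simps)
  then show ?thesis unfolding bf_def by (simp add: algebra_simps)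
qed

lemma bf_add1: "bf (poly6 a11 a22 a33 a12 a13 a23) (u + u') (v::'k^3) =
   bf (poly6 a11 a22 a33 a12 a13 a23) u v + bf (poly6 a11 a22 a33 a12 a13 a23) u' v"
  unfolding bf_poly6 by (simp add: algebra_simps)

lemma bf_smult1: "bf (poly6 a11 a22 a33 a12 a13 a23) (c *s u) (v::'k^3) =
   c * bf (poly6 a11 a22 a33 a12 a13 a23) u v"
  unfolding bf_poly6 by (simp add: algebra_simps)

lemma bf_sym: "bf (poly6 a11 a22 a33 a12 a13 a23) u (v::'k^3) = bf (poly6 a11 a22 a33 a12 a13 a23) v u"
  unfolding bf_poly6 by (simp add: algebra_simps)

lemma bf_self: "bf (poly6 a11 a22 a33 a12 a13 a23) u (u::'k^3) = 0"
  unfolding bf_poly6 by (simp add: mult.commute)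

lemma poly6_hom: "poly6 a11 a22 a33 a12 a13 a23 (c *s v) = c * c * poly6 a11 a22 a33 a12 a13 a23 (v::'k^3)"
  unfolding poly6_def by (simp add: algebra_simps)

definition nuc :: "'k \<Rightarrow> 'k \<Rightarrow> 'k \<Rightarrow> 'k^3" where
  "nuc a12 a13 a23 = (\<chi> i. if i = 1 then a23 else if i = 2 then a13 else a12)"

lemma nuc_comp[simp]: "nuc a12 a13 a23 $ 1 = a23" "nuc a12 a13 a23 $ 2 = a13" "nuc a12 a13 a23 $ 3 = a12"
  by (simp_all add: nuc_def)

lemma bf_nuc: "bf (poly6 a11 a22 a33 a12 a13 (a23::'k)) (nuc a12 a13 a23) v = 0"
proof -
  have "bf (poly6 a11 a22 a33 a12 a13 a23) (nuc a12 a13 a23) v =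
    (a12*a23* v$2 + a12*a23* v$2) + (a12*a13* v$1 + a12*a13* v$1) + (a13*a23* v$3 + a13*a23* v$3)"
    unfolding bf_poly6 by (simp add: algebra_simps)
  then show ?thesis by simp
qed

lemma ee_comp[simp]: "ee i $ j = (if j = i then 1 else 0)"
  by (simp add: ee_def)

lemma bf_ee12: "bf (poly6 a11 a22 a33 a12 a13 a23) (ee 1) (ee 2) = (a12::'k)"
  by (simp add: bf_poly6)
lemma bf_ee13: "bf (poly6 a11 a22 a33 a12 a13 a23) (ee 1) (ee 3) = (a13::'k)"
  by (simp add: bf_poly6)
lemma bf_ee23: "bf (poly6 a11 a22 a33 a12 a13 a23) (ee 2) (ee 3) = (a23::'k)"
  by (simp add: bf_poly6)

lemma radical_nuc:
  assumes nz: "nuc a12 a13 (a23::'k) \<noteq> 0" and w: "\<forall>v. bf (poly6 a11 a22 a33 a12 a13 a23) w v = 0"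
  shows "\<exists>t. w = t *s nuc a12 a13 a23"
proof -
  have e1: "a12* w$2 + a13* w$3 = 0" using w[rule_format, of "ee 1"] unfolding bf_poly6 by simp
  have e2: "a12* w$1 + a23* w$3 = 0" using w[rule_format, of "ee 2"] unfolding bf_poly6 by simp
  have e3: "a13* w$1 + a23* w$2 = 0" using w[rule_format, of "ee 3"] unfolding bf_poly6 by simp
  have cases: "a12 \<noteq> 0 \<or> a13 \<noteq> 0 \<or> a23 \<noteq> 0" using nz by (auto simp: vec_eq_iff forall_3)
  show ?thesis
  proof (cases "a12 \<noteq> 0")
    case True
    have "w = (w$3 / a12) *s nuc a12 a13 a23"
      using e1 e2 True by (auto simp: vec_eq_iff forall_3 c2_add_eq0 field_simps)
    then show ?thesis by blast
  next
    case F12: False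
    show ?thesis
    proof (cases "a13 \<noteq> 0")
      case True
      have "w = (w$2 / a13) *s nuc a12 a13 a23"
        using e1 e3 F12 True by (auto simp: vec_eq_iff forall_3 c2_add_eq0 field_simps)
      then show ?thesis by blast
    next
      case False
      then have T: "a23 \<noteq> 0" using cases F12 by simp
      have "w = (w$1 / a23) *s nuc a12 a13 a23"
        using e2 e3 F12 False T by (auto simp: vec_eq_iff forall_3 c2_add_eq0 field_simps)
      then show ?thesis by blast
    qed
  qed
qed

lemma zero_nuc_square:
  assumes "nuc a12 a13 (a23::'k) = 0"
  shows "\<exists>s::'k^3. \<forall>v. poly6 a11 a22 a33 a12 a13 a23 v = (s$1* v$1 + s$2* v$2 + s$3* v$3) * (s$1* v$1 + s$2* v$2 + s$3* v$3)"
proof -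
  have z: "a12 = 0" "a13 = 0" "a23 = 0" using assms by (auto simp: vec_eq_iff forall_3)
  obtain s1 s2 s3 where s: "s1* s1 = a11" "s2* s2 = a22" "s3* s3 = a33" using sq_surj by metis
  define s :: "'k^3" where "s = (\<chi> i. if i = 1 then s1 else if i = 2 then s2 else s3)"
  have "poly6 a11 a22 a33 a12 a13 a23 v = (s$1* v$1 + s$2* v$2 + s$3* v$3) * (s$1* v$1 + s$2* v$2 + s$3* v$3)" for v
  proof -
    have "(s1* v$1 + s2* v$2 + s3* v$3) * (s1* v$1 + s2* v$2 + s3* v$3) =
      s1* s1* v$1* v$1 + s2* s2* v$2* v$2 + s3* s3* v$3* v$3 + ((s1* s2* v$1* v$2 + s1* s2* v$1* v$2) + (s1* s3* v$1* v$3 + s1* s3* v$1* v$3)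
       + (s2* s3* v$2* v$3 + s2* s3* v$2* v$3))" by (simp add: algebra_simps)
    then show ?thesis using z s by (simp add: poly6_def s_def)
  qed
  then show ?thesis by blast
qed

end


lemma ee_nth[simp]: "(ee i :: 'k::field^3) $ j = (if j = i then 1 else 0)"
  by (simp add: ee_def)

definition vec3 :: "'k::field \<Rightarrow> 'k \<Rightarrow> 'k \<Rightarrow> 'k^3" where
  "vec3 a b c = (\<chi> i. if i = 1 then a else if i = 2 then b else c)"

lemma vec3_comp[simp]: "vec3 a b c $ 1 = a" "vec3 a b c $ 2 = b" "vec3 a b c $ 3 = c"
  by (simp_all add: vec3_def)

definition lf :: "'k::field^3 \<Rightarrow> 'k^3 \<Rightarrow> 'k" where
  "lf l v = l$1 * v$1 + l$2 * v$2 + l$3 * v$3"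

lemma lf_add[simp]: "lf l (v + w) = lf l v + lf l w"
  by (simp add: lf_def algebra_simps)

lemma lf_smult[simp]: "lf l (c *s v) = c * lf l v"
  by (simp add: lf_def algebra_simps)

lemma lf_zero[simp]: "lf l 0 = 0"
  by (simp add: lf_def)

definition frame :: "'k::field^3 \<Rightarrow> 'k^3 \<Rightarrow> 'k^3 \<Rightarrow> 'k^3 \<Rightarrow> 'k^3 \<Rightarrow> 'k^3 \<Rightarrow> bool" where
  "frame u1 u2 u3 l1 l2 l3 \<longleftrightarrow> (\<forall>v. v = lf l1 v *s u1 + lf l2 v *s u2 + lf l3 v *s u3) \<and>
     lf l1 u1 = 1 \<and> lf l1 u2 = 0 \<and> lf l1 u3 = 0 \<and>
     lf l2 u1 = 0 \<and> lf l2 u2 = 1 \<and> lf l2 u3 = 0 \<and>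
     lf l3 u1 = 0 \<and> lf l3 u2 = 0 \<and> lf l3 u3 = 1"

definition comb :: "'k::field^3 \<Rightarrow> 'k^3 \<Rightarrow> 'k^3 \<Rightarrow> 'k \<Rightarrow> 'k \<Rightarrow> 'k \<Rightarrow> 'k^3" where
  "comb u1 u2 u3 x y z = x *s u1 + y *s u2 + z *s u3"

locale fr =
  fixes u1 u2 u3 l1 l2 l3 :: "'k::field^3"
  assumes fr: "frame u1 u2 u3 l1 l2 l3"
begin

abbreviation "cb \<equiv> comb u1 u2 u3"

lemma coords[simp]: "lf l1 (cb x y z) = x" "lf l2 (cb x y z) = y" "lf l3 (cb x y z) = z"
  using fr by (simp_all add: frame_def comb_def)

lemma decomp: "v = cb (lf l1 v) (lf l2 v) (lf l3 v)"
  using fr by (simp add: frame_def comb_def)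

lemma cb_eq_iff: "cb x y z = cb x' y' z' \<longleftrightarrow> x = x' \<and> y = y' \<and> z = z'"
  by (metis coords)

lemma cb_zero_iff: "cb x y z = 0 \<longleftrightarrow> x = 0 \<and> y = 0 \<and> z = 0"
proof -
  have "0 = cb 0 0 0" by (simp add: comb_def)
  then show ?thesis by (metis cb_eq_iff)
qed

lemma cb_smult: "c *s cb x y z = cb (c * x) (c * y) (c * z)"
  by (simp add: comb_def vector_add_ldistrib vector_smult_assoc)

lemma M_cb: "M *v cb x y z = x *s (M *v u1) + y *s (M *v u2) + z *s (M *v u3)"
  by (simp add: comb_def matrix_vector_right_distrib vector_scalar_commute)

lemma u_eq: "u1 = cb 1 0 0" "u2 = cb 0 1 0" "u3 = cb 0 0 1"
  by (simp_all add: comb_def)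

lemma vec_cb: "\<exists>x y z. v = cb x y z"
  using decomp by blast

end

lemma frame_nuc:
  assumes "(r::'k::field^3) \<noteq> 0"
  shows "\<exists>u1 u2 l1 l2 l3. frame u1 u2 r l1 l2 l3 \<and>
     ((u1 = ee 2 \<and> u2 = ee 3 \<and> r$1 \<noteq> 0) \<or> (u1 = ee 1 \<and> u2 = ee 3 \<and> r$2 \<noteq> 0) \<or>
      (u1 = ee 1 \<and> u2 = ee 2 \<and> r$3 \<noteq> 0))"
proof -
  consider "r$3 \<noteq> 0" | "r$3 = 0" "r$2 \<noteq> 0" | "r$3 = 0" "r$2 = 0" "r$1 \<noteq> 0"
    using assms by (auto simp: vec_eq_iff forall_3)
  then show ?thesis
  proof cases
    case 1
    have "frame (ee 1) (ee 2) r (vec3 1 0 (- r$1 / r$3)) (vec3 0 1 (- r$2 / r$3)) (vec3 0 0 (1 / r$3))"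
      using 1 by (auto simp: frame_def lf_def vec_eq_iff forall_3 field_simps)
    then show ?thesis using 1 by blast
  next
    case 2
    have "frame (ee 1) (ee 3) r (vec3 1 (- r$1 / r$2) 0) (vec3 0 (- r$3 / r$2) 1) (vec3 0 (1 / r$2) 0)"
      using 2 by (auto simp: frame_def lf_def vec_eq_iff forall_3 field_simps)
    then show ?thesis using 2 by blast
  next
    case 3
    have "frame (ee 2) (ee 3) r (vec3 (- r$2 / r$1) 1 0) (vec3 (- r$3 / r$1) 0 1) (vec3 (1 / r$1) 0 0)"
      using 3 by (auto simp: frame_def lf_def vec_eq_iff forall_3 field_simps)
    then show ?thesis using 3 by blast
  qed
qed

lemma frame_lin:
  assumes "(s::'k::field^3) \<noteq> 0"
  shows "\<exists>u1 u2 u3 l1 l2. frame u1 u2 u3 l1 l2 s"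
proof -
  consider "s$3 \<noteq> 0" | "s$3 = 0" "s$2 \<noteq> 0" | "s$3 = 0" "s$2 = 0" "s$1 \<noteq> 0"
    using assms by (auto simp: vec_eq_iff forall_3)
  then show ?thesis
  proof cases
    case 1
    have "frame (vec3 1 0 (- s$1 / s$3)) (vec3 0 1 (- s$2 / s$3)) (vec3 0 0 (1 / s$3)) (ee 1) (ee 2) s"
      using 1 by (auto simp: frame_def lf_def vec_eq_iff forall_3 field_simps)
    then show ?thesis by blast
  next
    case 2
    have "frame (vec3 1 (- s$1 / s$2) 0) (vec3 0 (- s$3 / s$2) 1) (vec3 0 (1 / s$2) 0) (ee 1) (ee 3) s"
      using 2 by (auto simp: frame_def lf_def vec_eq_iff forall_3 field_simps)
    then show ?thesis by blast
  next
    case 3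
    have "frame (vec3 (- s$2 / s$1) 1 0) (vec3 (- s$3 / s$1) 0 1) (vec3 (1 / s$1) 0 0) (ee 2) (ee 3) s"
      using 3 by (auto simp: frame_def lf_def vec_eq_iff forall_3 field_simps)
    then show ?thesis by blast
  qed
qed

context c2f begin

lemma Q_comb:
  fixes a11 a22 a33 a12 a13 a23 :: 'k
  defines "Q \<equiv> poly6 a11 a22 a33 a12 a13 a23"
  shows "Q (comb u1 u2 u3 x y z) = x * x * Q u1 + y * y * Q u2 + z * z * Q u3
     + x * y * bf Q u1 u2 + x * z * bf Q u1 u3 + y * z * bf Q u2 u3"
proof -
  have h: "Q (c *s v) = c * c * Q v" for c v unfolding Q_def by (rule poly6_hom)
  have b1: "bf Q (u + u') v = bf Q u v + bf Q u' v" for u u' v unfolding Q_def by (rule bf_add1)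
  have b2: "bf Q (c *s u) v = c * bf Q u v" for c u v unfolding Q_def by (rule bf_smult1)
  have bs: "bf Q u v = bf Q v u" for u v unfolding Q_def by (rule bf_sym)
  have b3: "bf Q u (c *s v) = c * bf Q u v" for c u v using b2 bs by metis
  have "Q (comb u1 u2 u3 x y z) = Q (x *s u1 + y *s u2) + Q (z *s u3) + bf Q (x *s u1 + y *s u2) (z *s u3)"
    unfolding comb_def by (rule Q_add)
  also have "Q (x *s u1 + y *s u2) = Q (x *s u1) + Q (y *s u2) + bf Q (x *s u1) (y *s u2)"
    by (rule Q_add)
  finally show ?thesis by (simp add: h b1 b2 b3 algebra_simps)
qed

end


lemma lift_even:
  fixes \<tau> :: "'a \<Rightarrow> 'a"
  assumes "finite Z" "\<tau> permutes Z" "even CARD('b::finite)"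
  shows "(\<lambda>(z, t::'b). (\<tau> z, t)) permutes (Z \<times> UNIV) \<and> evenperm (\<lambda>(z, t::'b). (\<tau> z, t))"
  using assms(2,1)
proof (induction \<tau> rule: permutes_induct)
  case id
  have e0: "(\<lambda>(z, t::'b). (id z, t)) = id" by (auto simp: fun_eq_iff id_def)
  show ?case by (simp only: e0 permutes_id evenperm_id simp_thms)
next
  case (swap a b p)
  define A where "A = {a} \<times> (UNIV :: 'b set)"
  define f where "f = (\<lambda>(z::'a, t::'b). (b, t))"
  have finA: "finite A" by (simp add: A_def)
  have injf: "inj_on f A" by (auto simp: A_def f_def inj_on_def)
  have fA: "f ` A = {b} \<times> UNIV" by (auto simp: A_def f_def image_iff)
  have disj: "f ` A \<inter> A = {}" using swap(3) unfolding fA by (auto simp: A_def)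
  obtain \<psi> where \<psi>: "\<psi> permutes (A \<union> f ` A)" "evenperm \<psi> = even (card A)"
    "\<forall>x\<in>A. \<psi> x = f x \<and> \<psi> (f x) = x" using swap_pairs[OF finA injf disj] by blast
  have cA: "card A = CARD('b)" by (simp add: A_def card_cartesian_product)
  have \<psi>eq: "\<psi> = (\<lambda>(z, t). (Transposition.transpose a b z, t))"
  proof
    fix x :: "'a \<times> 'b"
    obtain z t where x: "x = (z, t)" by force
    show "\<psi> x = (\<lambda>(z, t). (Transposition.transpose a b z, t)) x"
    proof (cases "z = a \<or> z = b")
      case True
      then show ?thesis using \<psi>(3) swap(3) by (auto simp: x A_def f_def)
    next
      case False
      then have "x \<notin> A \<union> f ` A" unfolding fA by (auto simp: x A_def)
      then show ?thesis using \<psi>(1) False by (auto simp: x permutes_def)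
    qed
  qed
  have pl: "(\<lambda>(z, t::'b). (p z, t)) permutes (Z \<times> UNIV)" "evenperm (\<lambda>(z, t::'b). (p z, t))"
    using swap by auto
  have comp: "(\<lambda>(z, t::'b). ((Transposition.transpose a b \<circ> p) z, t)) = \<psi> \<circ> (\<lambda>(z, t). (p z, t))"
    by (auto simp: fun_eq_iff \<psi>eq)
  have \<psi>Z: "\<psi> permutes (Z \<times> UNIV)"
    by (rule permutes_subset[OF \<psi>(1)]) (use swap(1,2) in \<open>auto simp: A_def f_def\<close>)
  have fin: "finite (Z \<times> (UNIV :: 'b set))" using assms(1) by simp
  have ev: "evenperm (\<psi> \<circ> (\<lambda>(z, t::'b). (p z, t)))"
    using evenperm_comp[OF perm_of_permutes[OF \<psi>Z fin] perm_of_permutes[OF pl(1) fin]]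
      \<psi>(2) cA assms(3) pl(2) by simp
  show ?case unfolding comp using permutes_compose[OF pl(1) \<psi>Z] ev by blast
qed

lemma fib_even:
  fixes A :: "'a \<Rightarrow> 'b::finite \<Rightarrow> 'b"
  assumes "finite Z" "\<forall>z\<in>Z. A z permutes UNIV \<and> evenperm (A z)"
  shows "(\<lambda>(z, t). if z \<in> Z then (z, A z t) else (z, t)) permutes (Z \<times> UNIV) \<and>
         evenperm (\<lambda>(z, t). if z \<in> Z then (z, A z t) else (z, t))"
  using assms
proof (induction Z rule: finite_induct)
  case empty
  have e0: "(\<lambda>(z, t). if z \<in> {} then (z, A z t) else (z, t)) = id" by (auto simp: fun_eq_iff id_def)
  show ?case by (simp only: e0 permutes_id evenperm_id simp_thms)
next
  case (insert z0 Z)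
  define F where "F = (\<lambda>(z, t). if z \<in> Z then (z, A z t) else (z, t))"
  define G where "G = (\<lambda>(z, t). if z = z0 then (z, A z0 t) else (z, t))"
  have IH: "F permutes (Z \<times> UNIV)" "evenperm F" using insert F_def by auto
  have Az: "A z0 permutes UNIV" "evenperm (A z0)" using insert.prems by auto
  have Gt: "G permutes ((\<lambda>t. (z0, t)) ` UNIV)" "evenperm G = evenperm (A z0)"
  proof -
    have "G permutes ((\<lambda>t. (z0, t)) ` UNIV)"
    proof (rule bij_imp_permutes)
      have "inj (A z0)" "surj (A z0)" using Az(1) permutes_inj permutes_surj by blast+
      then show "bij_betw G (range (Pair z0)) (range (Pair z0))"
        by (auto simp: bij_betw_def inj_on_def G_def image_iff) (metis surjD)
    next
      fix x :: "'a \<times> 'b" assume "x \<notin> range (Pair z0)" then show "G x = x" by (auto simp: G_def split: prod.splits)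
    qed
    then show "G permutes ((\<lambda>t. (z0, t)) ` UNIV)"
      "evenperm G = evenperm (A z0)"
      using transfer_evenperm[of UNIV "\<lambda>t. (z0, t)" "A z0" G] by (auto simp: G_def inj_on_def)
  qed
  have fin: "finite (insert z0 Z \<times> (UNIV :: 'b set))" using insert by simp
  have GZ: "G permutes (insert z0 Z \<times> UNIV)" by (rule permutes_subset[OF Gt(1)]) auto
  have FZ: "F permutes (insert z0 Z \<times> UNIV)" by (rule permutes_subset[OF IH(1)]) auto
  have eq: "(\<lambda>(z, t). if z \<in> insert z0 Z then (z, A z t) else (z, t)) = G \<circ> F"
    using insert.hyps by (auto simp: fun_eq_iff G_def F_def)
  have ev: "evenperm (G \<circ> F)"
    using evenperm_comp[OF perm_of_permutes[OF GZ fin] perm_of_permutes[OF FZ fin]] Gt(2) Az(2) IH(2) by simp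
  show ?case unfolding eq using permutes_compose[OF FZ GZ] ev by blast
qed

context c2f begin

lemma GU:
  fixes \<phi> :: "'k option \<Rightarrow> 'a"
  assumes "inj \<phi>" "g permutes (range \<phi>)" "\<And>z. g (\<phi> z) = \<phi> (mob a b c d z)" "a * d \<noteq> b * c"
  shows "evenperm g"
proof -
  have m: "mob a b c d permutes UNIV" "evenperm (mob a b c d)" using mob_even[OF assms(4)] by auto
  have "evenperm g = evenperm (mob a b c d)"
    using transfer_evenperm[of UNIV \<phi> "mob a b c d" g] assms by auto
  then show ?thesis using m by simp
qed

end


lemma card_opt: "CARD('k::finite option) = CARD('k) + 1"
  by (simp add: card_UNIV_option)

lemma ker2_conv:
  assumes "(x::'a::field, y) \<noteq> (0, 0)" "a * x + b * y = 0" "c * x + d * y = 0"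
  shows "a * d = b * c"
proof -
  have "(a * d - b * c) * x = d * (a * x + b * y) - b * (c * x + d * y)" by (simp add: algebra_simps)
  then have 1: "(a * d - b * c) * x = 0" using assms by simp
  have "(a * d - b * c) * y = a * (c * x + d * y) - c * (a * x + b * y)" by (simp add: algebra_simps)
  then have 2: "(a * d - b * c) * y = 0" using assms by simp
  show ?thesis using 1 2 assms(1) by auto
qed

context c2f begin

lemma caseA:
  fixes Q :: "'k^3 \<Rightarrow> 'k" and M :: "'k^3^3"
  assumes fr: "frame u1 u2 u3 l1 l2 l3"
    and Qsq: "\<forall>v. Q v = lf l3 v * lf l3 v"
    and Minv: "invertible M" and kap: "\<forall>v. Q (M *v v) = \<kappa> * Q v"
    and gp: "g permutes conic_points Q"
    and gdef: "\<forall>P\<in>conic_points Q. g P = (\<lambda>v. M *v v) ` P"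
  shows "card (conic_points Q) = CARD('k) + 1 \<and> evenperm g"
proof -
  interpret F: fr u1 u2 u3 l1 l2 l3 using fr by (rule fr.intro)
  define w where "w z = F.cb (fst (rep z)) (snd (rep z)) 0" for z
  define \<phi> where "\<phi> z = proj_point (w z)" for z
  have wnz: "w z \<noteq> 0" for z unfolding w_def F.cb_zero_iff using rep_nz' by blast
  have Qcb: "Q (F.cb x y z) = z * z" for x y z by (simp add: Qsq)
  have key: "\<exists>\<mu>. \<mu> \<noteq> 0 \<and> F.cb x y 0 = \<mu> *s w (pt x y)" if xy0: "(x, y) \<noteq> (0, 0)" for x y
  proof -
    obtain \<mu> where m: "\<mu> \<noteq> 0" "x = \<mu> * fst (rep (pt x y))" "y = \<mu> * snd (rep (pt x y))"
      using rep_pt[OF xy0] by blast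
    have "\<mu> *s w (pt x y) = F.cb x y 0" unfolding w_def F.cb_smult using m by simp
    then show ?thesis using m(1) by metis
  qed
  have X: "conic_points Q = range \<phi>"
  proof
    show "range \<phi> \<subseteq> conic_points Q"
      unfolding conic_points_def \<phi>_def using wnz Qcb by (auto simp: w_def)
  next
    show "conic_points Q \<subseteq> range \<phi>"
    proof
      fix P assume "P \<in> conic_points Q"
      then obtain v where v: "P = proj_point v" "v \<noteq> 0" "Q v = 0" by (rule conic_pointsE)
      define x y z where "x = lf l1 v" "y = lf l2 v" "z = lf l3 v"
      have vd: "v = F.cb x y z" unfolding x_y_z_def by (rule F.decomp)
      have "z = 0" using v(3) Qcb vd by simp
      then have xy: "(x, y) \<noteq> (0, 0)" using v(2) vd by (auto simp: F.cb_zero_iff)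
      obtain \<mu> where "\<mu> \<noteq> 0" "F.cb x y 0 = \<mu> *s w (pt x y)" using key[OF xy] by blast
      then have "P = \<phi> (pt x y)" using v vd \<open>z = 0\<close> by (simp add: \<phi>_def pp_scale)
      then show "P \<in> range \<phi>" by simp
    qed
  qed
  have inj: "inj \<phi>"
  proof (rule injI)
    fix z z' assume "\<phi> z = \<phi> z'"
    then obtain c where c: "c \<noteq> 0" "w z' = c *s w z" unfolding \<phi>_def pp_eq_iff by blast
    then have "fst (rep z') = c * fst (rep z)" "snd (rep z') = c * snd (rep z)"
      unfolding w_def F.cb_smult F.cb_eq_iff by auto
    then have "z' = pt (c * fst (rep z)) (c * snd (rep z))" by (metis pt_rep)
    then show "z = z'" using c(1) by (simp add: pt_scale)
  qed
  define a where "a = lf l1 (M *v u1)"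
  define b where "b = lf l1 (M *v u2)"
  define c where "c = lf l2 (M *v u1)"
  define d where "d = lf l2 (M *v u2)"
  have Mcb: "M *v F.cb x y 0 = F.cb (a * x + b * y) (c * x + d * y) 0" for x y
  proof -
    define v' where "v' = M *v F.cb x y 0"
    have "Q v' = 0" unfolding v'_def using kap Qcb by simp
    then have z: "lf l3 v' = 0" using Qsq by simp
    have "lf l1 v' = a * x + b * y" "lf l2 v' = c * x + d * y"
      unfolding v'_def F.M_cb a_def b_def c_def d_def by (simp_all add: mult.commute)
    then show ?thesis using F.decomp[of v'] z by (simp add: v'_def)
  qed
  have abcd: "a * d \<noteq> b * c"
  proof
    assume ad: "a * d = b * c"
    obtain x y where xy: "(x, y) \<noteq> (0, 0)" "a * x + b * y = 0" "c * x + d * y = 0"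
      using ker2[OF ad] by blast
    have "M *v F.cb x y 0 = F.cb 0 0 0" unfolding Mcb[of x y] xy(2,3) by (rule refl)
    then have "M *v F.cb x y 0 = 0" by (simp add: comb_def)
    then have "F.cb x y 0 = 0" using invertible_inj0[OF Minv] by blast
    then show False using xy(1) by (simp add: F.cb_zero_iff)
  qed
  have equiv: "g (\<phi> z) = \<phi> (mob a b c d z)" for z
  proof -
    obtain x0 y0 where r: "rep z = (x0, y0)" by force
    have x0y0: "(x0, y0) \<noteq> (0, 0)" using rep_nz r by metis
    have "\<phi> z \<in> conic_points Q" using X by simp
    then have "g (\<phi> z) = proj_point (M *v w z)" using gdef pp_image by (simp add: \<phi>_def)
    also have "M *v w z = F.cb (a * x0 + b * y0) (c * x0 + d * y0) 0" using Mcb by (simp add: w_def r)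
    finally have g1: "g (\<phi> z) = proj_point (F.cb (a * x0 + b * y0) (c * x0 + d * y0) 0)" .
    have nz: "(a * x0 + b * y0, c * x0 + d * y0) \<noteq> (0, 0)"
    proof
      assume h: "(a * x0 + b * y0, c * x0 + d * y0) = (0, 0)"
      have e1: "a * x0 + b * y0 = 0" and e2: "c * x0 + d * y0 = 0" using h by simp_all
      show False using ker2_conv[OF x0y0 e1 e2] abcd by simp
    qed
    obtain \<mu> where m: "\<mu> \<noteq> 0" "F.cb (a * x0 + b * y0) (c * x0 + d * y0) 0 = \<mu> *s w (pt (a * x0 + b * y0) (c * x0 + d * y0))"
      using key[OF nz] by blast
    have "pt (a * x0 + b * y0) (c * x0 + d * y0) = mob a b c d z"
      using mob_pt[OF x0y0] pt_rep[of z] r by simp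
    then show ?thesis using g1 m by (simp add: \<phi>_def pp_scale)
  qed
  have ev: "evenperm g" using GU[OF inj _ equiv abcd] gp X by simp
  have "card (conic_points Q) = CARD('k) + 1" unfolding X using card_image[OF inj] card_opt by simp
  then show ?thesis using ev by simp
qed

end


context c2f begin

lemma caseB:
  fixes Q :: "'k^3 \<Rightarrow> 'k" and M :: "'k^3^3"
  assumes fr: "frame u1 u2 u3 l1 l2 l3"
    and Qf: "\<forall>x y z. Q (comb u1 u2 u3 x y z) = \<alpha>*x*x + \<beta>*y*y + \<delta>*x*y + \<gamma>*z*z"
    and g0: "\<gamma> \<noteq> 0"
    and Minv: "invertible M" and kap: "\<forall>v. Q (M *v v) = \<kappa> * Q v"
    and Mu3: "M *v u3 = lm *s u3"
    and gp: "g permutes conic_points Q"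
    and gdef: "\<forall>P\<in>conic_points Q. g P = (\<lambda>v. M *v v) ` P"
  shows "card (conic_points Q) = CARD('k) + 1 \<and> evenperm g"
proof -
  interpret F: fr u1 u2 u3 l1 l2 l3 using fr by (rule fr.intro)
  define q where "q x y = \<alpha>*x*x + \<beta>*y*y + \<delta>*x*y" for x y
  have Qcb: "Q (F.cb x y z) = q x y + \<gamma>*z*z" for x y z using Qf by (simp add: q_def)
  have qh: "q (\<mu> * x) (\<mu> * y) = \<mu> * \<mu> * q x y" for \<mu> x y by (simp add: q_def algebra_simps)
  define sq where "sq z = (SOME s. s * s = q (fst (rep z)) (snd (rep z)) / \<gamma>)" for z
  have sq: "sq z * sq z = q (fst (rep z)) (snd (rep z)) / \<gamma>" for z
    unfolding sq_def by (rule someI_ex) (rule sq_surj)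
  define w where "w z = F.cb (fst (rep z)) (snd (rep z)) (sq z)" for z
  define \<phi> where "\<phi> z = proj_point (w z)" for z
  have wnz: "w z \<noteq> 0" for z unfolding w_def F.cb_zero_iff using rep_nz' by blast
  have Qw: "Q (w z) = 0" for z
  proof -
    have "\<gamma> * (sq z * sq z) = q (fst (rep z)) (snd (rep z))" using sq g0 by simp
    then show ?thesis unfolding w_def Qcb by (simp add: mult.assoc c2_add_eq0)
  qed
  have key: "\<exists>\<mu>. \<mu> \<noteq> 0 \<and> F.cb x y z = \<mu> *s w (pt x y)"
    if xy0: "(x, y) \<noteq> (0, 0)" and Q0: "q x y + \<gamma>*z*z = 0" for x y z
  proof -
    obtain \<mu> where m: "\<mu> \<noteq> 0" "x = \<mu> * fst (rep (pt x y))" "y = \<mu> * snd (rep (pt x y))"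
      using rep_pt[OF xy0] by blast
    define x0 y0 where "x0 = fst (rep (pt x y))" "y0 = snd (rep (pt x y))"
    have "q x y = \<mu> * \<mu> * q x0 y0" using m qh x0_y0_def by metis
    then have "\<gamma> * z * z = \<mu> * \<mu> * q x0 y0" using Q0 by (simp add: c2_add_eq0)
    then have "(z / \<mu>) * (z / \<mu>) = q x0 y0 / \<gamma>" using m(1) g0 by (simp add: field_simps)
    then have "(z / \<mu>) * (z / \<mu>) = sq (pt x y) * sq (pt x y)" using sq x0_y0_def by simp
    then have zt: "z = \<mu> * sq (pt x y)" using sq_inj m(1) by (metis nonzero_mult_div_cancel_left mult.commute times_divide_eq_right)
    have "\<mu> *s w (pt x y) = F.cb x y z" unfolding w_def F.cb_smult using m zt by simp
    then show ?thesis using m(1) by metis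
  qed
  have X: "conic_points Q = range \<phi>"
  proof
    show "range \<phi> \<subseteq> conic_points Q"
      unfolding conic_points_def \<phi>_def using wnz Qw by auto
  next
    show "conic_points Q \<subseteq> range \<phi>"
    proof
      fix P assume "P \<in> conic_points Q"
      then obtain v where v: "P = proj_point v" "v \<noteq> 0" "Q v = 0" by (rule conic_pointsE)
      define x y z where "x = lf l1 v" "y = lf l2 v" "z = lf l3 v"
      have vd: "v = F.cb x y z" unfolding x_y_z_def by (rule F.decomp)
      have Q0: "q x y + \<gamma>*z*z = 0" using v(3) Qcb vd by simp
      have xy: "(x, y) \<noteq> (0, 0)"
      proof
        assume "(x, y) = (0, 0)"
        then have "\<gamma> * z * z = 0" using Q0 by (simp add: q_def)
        then have "z = 0" using g0 by simp
        then show False using v(2) vd \<open>(x, y) = (0, 0)\<close> by (simp add: F.cb_zero_iff)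
      qed
      obtain \<mu> where "\<mu> \<noteq> 0" "F.cb x y z = \<mu> *s w (pt x y)" using key[OF xy Q0] by blast
      then have "P = \<phi> (pt x y)" using v vd by (simp add: \<phi>_def pp_scale)
      then show "P \<in> range \<phi>" by simp
    qed
  qed
  have inj: "inj \<phi>"
  proof (rule injI)
    fix z z' assume "\<phi> z = \<phi> z'"
    then obtain c where c: "c \<noteq> 0" "w z' = c *s w z" unfolding \<phi>_def pp_eq_iff by blast
    then have "fst (rep z') = c * fst (rep z)" "snd (rep z') = c * snd (rep z)"
      unfolding w_def F.cb_smult F.cb_eq_iff by auto
    then have "z' = pt (c * fst (rep z)) (c * snd (rep z))" by (metis pt_rep)
    then show "z = z'" using c(1) by (simp add: pt_scale)
  qed
  define a where "a = lf l1 (M *v u1)"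
  define b where "b = lf l1 (M *v u2)"
  define c where "c = lf l2 (M *v u1)"
  define d where "d = lf l2 (M *v u2)"
  define e where "e = lf l3 (M *v u1)"
  define f where "f = lf l3 (M *v u2)"
  have l3: "lf l1 u3 = 0" "lf l2 u3 = 0" "lf l3 u3 = 1" using fr by (simp_all add: frame_def)
  have Mcb: "M *v F.cb x y z = F.cb (a * x + b * y) (c * x + d * y) (e * x + f * y + lm * z)" for x y z
  proof -
    define v' where "v' = M *v F.cb x y z"
    have "lf l1 v' = a * x + b * y" "lf l2 v' = c * x + d * y" "lf l3 v' = e * x + f * y + lm * z"
      unfolding v'_def F.M_cb a_def b_def c_def d_def e_def f_def Mu3 using l3 by (simp_all add: mult.commute)
    then show ?thesis using F.decomp[of v'] by (simp add: v'_def)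
  qed
  have u3nz: "u3 \<noteq> 0" using l3 by auto
  have lnz: "lm \<noteq> 0"
  proof
    assume "lm = 0" then have "M *v u3 = 0" using Mu3 by simp
    then show False using invertible_inj0[OF Minv] u3nz by blast
  qed
  have injM: "inj ((*v) M)" using inj_matrix_vector_mult[OF Minv] .
  have abcd: "a * d \<noteq> b * c"
  proof
    assume ad: "a * d = b * c"
    obtain x y where xy: "(x, y) \<noteq> (0, 0)" "a * x + b * y = 0" "c * x + d * y = 0"
      using ker2[OF ad] by blast
    have 1: "M *v F.cb x y 0 = F.cb 0 0 (e * x + f * y)" unfolding Mcb[of x y] xy(2,3) by simp
    have 2: "M *v F.cb 0 0 ((e * x + f * y) / lm) = F.cb 0 0 (e * x + f * y)"
      unfolding Mcb using lnz by simp
    have "F.cb x y 0 = F.cb 0 0 ((e * x + f * y) / lm)" using 1 2 injM by (metis injD)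
    then show False using xy(1) by (simp add: F.cb_eq_iff)
  qed
  have equiv: "g (\<phi> z) = \<phi> (mob a b c d z)" for z
  proof -
    obtain x0 y0 where r: "rep z = (x0, y0)" by force
    have x0y0: "(x0, y0) \<noteq> (0, 0)" using rep_nz r by metis
    have "\<phi> z \<in> conic_points Q" using X by simp
    then have "g (\<phi> z) = proj_point (M *v w z)" using gdef pp_image by (simp add: \<phi>_def)
    also have "M *v w z = F.cb (a * x0 + b * y0) (c * x0 + d * y0) (e * x0 + f * y0 + lm * sq z)"
      using Mcb by (simp add: w_def r)
    finally have g1: "g (\<phi> z) = proj_point (F.cb (a * x0 + b * y0) (c * x0 + d * y0) (e * x0 + f * y0 + lm * sq z))" .
    have "Q (F.cb (a * x0 + b * y0) (c * x0 + d * y0) (e * x0 + f * y0 + lm * sq z)) = 0"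
      using kap Qw Mcb by (metis mult_zero_right r w_def fst_conv snd_conv)
    then have Q0: "q (a * x0 + b * y0) (c * x0 + d * y0) + \<gamma> * (e * x0 + f * y0 + lm * sq z) * (e * x0 + f * y0 + lm * sq z) = 0"
      using Qcb by simp
    have nz: "(a * x0 + b * y0, c * x0 + d * y0) \<noteq> (0, 0)"
    proof
      assume h: "(a * x0 + b * y0, c * x0 + d * y0) = (0, 0)"
      have e1: "a * x0 + b * y0 = 0" and e2: "c * x0 + d * y0 = 0" using h by simp_all
      show False using ker2_conv[OF x0y0 e1 e2] abcd by simp
    qed
    obtain \<mu> where m: "\<mu> \<noteq> 0" "F.cb (a * x0 + b * y0) (c * x0 + d * y0) (e * x0 + f * y0 + lm * sq z) = \<mu> *s w (pt (a * x0 + b * y0) (c * x0 + d * y0))"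
      using key[OF nz Q0] by blast
    have "pt (a * x0 + b * y0) (c * x0 + d * y0) = mob a b c d z"
      using mob_pt[OF x0y0] pt_rep[of z] r by simp
    then show ?thesis using g1 m by (simp add: \<phi>_def pp_scale)
  qed
  have ev: "evenperm g" using GU[OF inj _ equiv abcd] gp X by simp
  have "card (conic_points Q) = CARD('k) + 1" unfolding X using card_image[OF inj] card_opt by simp
  then show ?thesis using ev by simp
qed

end


lemma permutes_remove_fixed:
  assumes "g permutes X" "g a = a"
  shows "g permutes (X - {a})"
  using assms unfolding permutes_def by auto

context c2f begin

lemma caseC:
  fixes Q :: "'k^3 \<Rightarrow> 'k" and M :: "'k^3^3"
  assumes fr: "frame u1 u2 u3 l1 l2 l3"
    and Qf: "\<forall>x y z. Q (comb u1 u2 u3 x y z) = \<alpha>*x*x + \<beta>*y*y + \<delta>*x*y"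
    and Minv: "invertible M" and kap: "\<forall>v. Q (M *v v) = \<kappa> * Q v"
    and Mu3: "M *v u3 = lm *s u3"
    and gp: "g permutes conic_points Q"
    and gdef: "\<forall>P\<in>conic_points Q. g P = (\<lambda>v. M *v v) ` P"
  shows "odd (card (conic_points Q)) \<and> evenperm g"
proof -
  interpret F: fr u1 u2 u3 l1 l2 l3 using fr by (rule fr.intro)
  define q where "q x y = \<alpha>*x*x + \<beta>*y*y + \<delta>*x*y" for x y
  have Qcb: "Q (F.cb x y z) = q x y" for x y z using Qf by (simp add: q_def)
  have qh: "q (\<mu> * x) (\<mu> * y) = \<mu> * \<mu> * q x y" for \<mu> x y by (simp add: q_def algebra_simps)
  define Z where "Z = {z. q (fst (rep z)) (snd (rep z)) = 0}"
  define S where "S = Z \<times> (UNIV :: 'k set)"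
  define w where "w zt = F.cb (fst (rep (fst zt))) (snd (rep (fst zt))) (snd zt)" for zt
  define \<phi> where "\<phi> zt = proj_point (w zt)" for zt
  define p3 where "p3 = proj_point u3"
  have wnz: "w zt \<noteq> 0" for zt unfolding w_def F.cb_zero_iff using rep_nz' by blast
  have l3: "lf l1 u3 = 0" "lf l2 u3 = 0" "lf l3 u3 = 1" using fr by (simp_all add: frame_def)
  have u3nz: "u3 \<noteq> 0" using l3 by auto
  have u3cb: "u3 = F.cb 0 0 1" by (simp add: comb_def)
  have finZ: "finite Z" by simp
  have key: "\<exists>\<mu>. \<mu> \<noteq> 0 \<and> F.cb x y z = \<mu> *s w (pt x y, z / \<mu>) \<and> pt x y \<in> Z"
    if xy0: "(x, y) \<noteq> (0, 0)" and Q0: "q x y = 0" for x y z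
  proof -
    obtain \<mu> where m: "\<mu> \<noteq> 0" "x = \<mu> * fst (rep (pt x y))" "y = \<mu> * snd (rep (pt x y))"
      using rep_pt[OF xy0] by blast
    have "q x y = \<mu> * \<mu> * q (fst (rep (pt x y))) (snd (rep (pt x y)))" using m qh by metis
    then have "pt x y \<in> Z" using Q0 m(1) by (simp add: Z_def)
    moreover have "\<mu> *s w (pt x y, z / \<mu>) = F.cb x y z" unfolding w_def F.cb_smult using m by simp
    ultimately show ?thesis using m(1) by metis
  qed
  have X: "conic_points Q = insert p3 (\<phi> ` S)"
  proof
    show "insert p3 (\<phi> ` S) \<subseteq> conic_points Q"
    proof
      fix P assume "P \<in> insert p3 (\<phi> ` S)"
      then consider "P = p3" | zt where "zt \<in> S" "P = \<phi> zt" by auto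
      then show "P \<in> conic_points Q"
      proof cases
        case 1
        have "Q u3 = 0" using Qcb[of 0 0 1] u3cb by (simp add: q_def)
        then show ?thesis unfolding conic_points_def p3_def using u3nz 1 by (auto simp: p3_def)
      next
        case 2 then show ?thesis unfolding conic_points_def \<phi>_def using wnz Qcb
          by (auto simp: w_def S_def Z_def)
      qed
    qed
  next
    show "conic_points Q \<subseteq> insert p3 (\<phi> ` S)"
    proof
      fix P assume "P \<in> conic_points Q"
      then obtain v where v: "P = proj_point v" "v \<noteq> 0" "Q v = 0" by (rule conic_pointsE)
      define x y z where "x = lf l1 v" "y = lf l2 v" "z = lf l3 v"
      have vd: "v = F.cb x y z" unfolding x_y_z_def by (rule F.decomp)
      have Q0: "q x y = 0" using v(3) Qcb vd by simp
      show "P \<in> insert p3 (\<phi> ` S)"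
      proof (cases "(x, y) = (0, 0)")
        case True
        then have "v = z *s u3" using vd by (simp add: comb_def)
        then have "z \<noteq> 0" using v(2) by auto
        then have "P = p3" using v \<open>v = z *s u3\<close> by (simp add: p3_def pp_scale)
        then show ?thesis by simp
      next
        case False
        obtain \<mu> where "\<mu> \<noteq> 0" "F.cb x y z = \<mu> *s w (pt x y, z / \<mu>)" "pt x y \<in> Z"
          using key[OF False Q0] by blast
        then have "P = \<phi> (pt x y, z / \<mu>)" "(pt x y, z / \<mu>) \<in> S" using v vd
          by (simp_all add: \<phi>_def pp_scale S_def)
        then show ?thesis by blast
      qed
    qed
  qed
  have p3notin: "p3 \<notin> \<phi> ` S"
  proof
    assume "p3 \<in> \<phi> ` S"
    then obtain zt where "proj_point u3 = proj_point (w zt)" unfolding p3_def \<phi>_def by auto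
    then obtain c where "w zt = c *s u3" using pp_eq_iff by blast
    then have "w zt = F.cb 0 0 c" by (simp add: comb_def)
    then show False unfolding w_def F.cb_eq_iff using rep_nz' by blast
  qed
  have injS: "inj_on \<phi> S"
  proof (rule inj_onI)
    fix zt zt' assume "zt \<in> S" "zt' \<in> S" "\<phi> zt = \<phi> zt'"
    then obtain c where c: "c \<noteq> 0" "w zt' = c *s w zt" unfolding \<phi>_def pp_eq_iff by blast
    then have h: "fst (rep (fst zt')) = c * fst (rep (fst zt))" "snd (rep (fst zt')) = c * snd (rep (fst zt))"
      "snd zt' = c * snd zt"
      unfolding w_def F.cb_smult F.cb_eq_iff by auto
    then have "fst zt' = pt (c * fst (rep (fst zt))) (c * snd (rep (fst zt)))" by (metis pt_rep)
    then have fz: "fst zt' = fst zt" using c(1) by (simp add: pt_scale)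
    then have "c = 1" using h rep_nz'[of "fst zt"]
      by (metis mult_cancel_right2)
    then show "zt = zt'" using fz h by (simp add: prod_eq_iff)
  qed
  define a where "a = lf l1 (M *v u1)"
  define b where "b = lf l1 (M *v u2)"
  define c where "c = lf l2 (M *v u1)"
  define d where "d = lf l2 (M *v u2)"
  define e where "e = lf l3 (M *v u1)"
  define f where "f = lf l3 (M *v u2)"
  have Mcb: "M *v F.cb x y z = F.cb (a * x + b * y) (c * x + d * y) (e * x + f * y + lm * z)" for x y z
  proof -
    define v' where "v' = M *v F.cb x y z"
    have "lf l1 v' = a * x + b * y" "lf l2 v' = c * x + d * y" "lf l3 v' = e * x + f * y + lm * z"
      unfolding v'_def F.M_cb a_def b_def c_def d_def e_def f_def Mu3 using l3 by (simp_all add: mult.commute)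
    then show ?thesis using F.decomp[of v'] by (simp add: v'_def)
  qed
  have lnz: "lm \<noteq> 0"
  proof
    assume "lm = 0" then have "M *v u3 = 0" using Mu3 by simp
    then show False using invertible_inj0[OF Minv] u3nz by blast
  qed
  have injM: "inj ((*v) M)" using inj_matrix_vector_mult[OF Minv] .
  have abcd: "a * d \<noteq> b * c"
  proof
    assume ad: "a * d = b * c"
    obtain x y where xy: "(x, y) \<noteq> (0, 0)" "a * x + b * y = 0" "c * x + d * y = 0"
      using ker2[OF ad] by blast
    have 1: "M *v F.cb x y 0 = F.cb 0 0 (e * x + f * y)" unfolding Mcb[of x y] xy(2,3) by simp
    have 2: "M *v F.cb 0 0 ((e * x + f * y) / lm) = F.cb 0 0 (e * x + f * y)"
      unfolding Mcb using lnz by simp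
    have "F.cb x y 0 = F.cb 0 0 ((e * x + f * y) / lm)" using 1 2 injM by (metis injD)
    then show False using xy(1) by (simp add: F.cb_eq_iff)
  qed
  define X1 where "X1 z = a * fst (rep z) + b * snd (rep z)" for z
  define Y1 where "Y1 z = c * fst (rep z) + d * snd (rep z)" for z
  have nz: "(X1 z, Y1 z) \<noteq> (0, 0)" for z
  proof
    assume h: "(X1 z, Y1 z) = (0, 0)"
    have e1: "a * fst (rep z) + b * snd (rep z) = 0" and e2: "c * fst (rep z) + d * snd (rep z) = 0"
      using h by (simp_all add: X1_def Y1_def)
    have x0y0: "(fst (rep z), snd (rep z)) \<noteq> (0, 0)" using rep_nz' by blast
    show False using ker2_conv[OF x0y0 e1 e2] abcd by simp
  qed
  define mu where "mu z = (SOME \<mu>. \<mu> \<noteq> 0 \<and> X1 z = \<mu> * fst (rep (pt (X1 z) (Y1 z))) \<and> Y1 z = \<mu> * snd (rep (pt (X1 z) (Y1 z))))" for z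
  have mu: "mu z \<noteq> 0 \<and> X1 z = mu z * fst (rep (pt (X1 z) (Y1 z))) \<and> Y1 z = mu z * snd (rep (pt (X1 z) (Y1 z)))" for z
    unfolding mu_def by (rule someI_ex) (rule rep_pt[OF nz])
  have ptmob: "pt (X1 z) (Y1 z) = mob a b c d z" for z
  proof -
    have x0y0: "(fst (rep z), snd (rep z)) \<noteq> (0, 0)" using rep_nz' by blast
    show ?thesis using mob_pt[OF x0y0, of a b c d] by (simp add: X1_def Y1_def)
  qed
  define A where "A z t = (lm / mu z) * t + (e * fst (rep z) + f * snd (rep z)) / mu z" for z t
  have Mw: "M *v w (z, t) = mu z *s w (mob a b c d z, A z t)" for z t
  proof -
    have "M *v w (z, t) = F.cb (X1 z) (Y1 z) (e * fst (rep z) + f * snd (rep z) + lm * t)"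
      unfolding w_def Mcb by (simp add: X1_def Y1_def)
    also have "\<dots> = mu z *s w (mob a b c d z, A z t)"
    proof -
      have m0: "mu z \<noteq> 0" using mu[of z] by simp
      have "mu z * A z t = e * fst (rep z) + f * snd (rep z) + lm * t"
        using m0 by (simp add: A_def field_simps)
      then show ?thesis unfolding w_def F.cb_smult using mu[of z] ptmob[of z] by simp
    qed
    finally show ?thesis .
  qed
  have mobZ: "mob a b c d z \<in> Z" if "z \<in> Z" for z
  proof -
    have "Q (w (z, 0)) = 0" using that Qcb by (simp add: w_def Z_def)
    then have "Q (M *v w (z, 0)) = 0" using kap by simp
    then have "Q (mu z *s w (mob a b c d z, A z 0)) = 0" using Mw by simp
    then have "mu z * mu z * q (fst (rep (mob a b c d z))) (snd (rep (mob a b c d z))) = 0"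
      unfolding w_def F.cb_smult Qcb qh by simp
    then show ?thesis using mu[of z] by (simp add: Z_def)
  qed
  define p where "p zt = (if fst zt \<in> Z then (mob a b c d (fst zt), A (fst zt) (snd zt)) else zt)" for zt
  have g3: "g p3 = p3"
  proof -
    have "p3 \<in> conic_points Q" using X by simp
    then have "g p3 = proj_point (M *v u3)" using gdef pp_image by (simp add: p3_def)
    then show ?thesis using Mu3 lnz by (simp add: p3_def pp_scale)
  qed
  have gS: "g permutes (\<phi> ` S)"
  proof -
    have "g permutes (conic_points Q - {p3})" using permutes_remove_fixed[OF gp g3] .
    moreover have "conic_points Q - {p3} = \<phi> ` S" using X p3notin by auto
    ultimately show ?thesis by simp
  qed
  have eqv: "g (\<phi> zt) = \<phi> (p zt)" if "zt \<in> S" for zt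
  proof -
    obtain z t where zt: "zt = (z, t)" by force
    have zZ: "z \<in> Z" using that zt by (simp add: S_def)
    have "\<phi> zt \<in> conic_points Q" using X that by simp
    then have "g (\<phi> zt) = proj_point (M *v w zt)" using gdef pp_image by (simp add: \<phi>_def)
    also have "\<dots> = proj_point (w (mob a b c d z, A z t))" using Mw mu[of z] zt by (simp add: pp_scale)
    finally show ?thesis using zZ zt by (simp add: \<phi>_def p_def)
  qed
  have finS: "finite S" by (simp add: S_def)
  have pS: "p ` S \<subseteq> S" using mobZ by (auto simp: p_def S_def)
  have pout: "p x = x" if "x \<notin> S" for x
  proof -
    have "fst x \<notin> Z" using that by (cases x) (auto simp: S_def)
    then show ?thesis by (simp add: p_def)
  qed
  have tr: "p permutes S" "evenperm g = evenperm p"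
    using transfer_evenperm[OF finS injS pS pout gS eqv] by auto
  define \<tau> where "\<tau> z = (if z \<in> Z then mob a b c d z else z)" for z
  have mobperm: "mob a b c d permutes UNIV" using mob_even[OF abcd] by simp
  have \<tau>perm: "\<tau> permutes Z"
  proof (rule bij_imp_permutes)
    have im: "inj (mob a b c d)" using permutes_inj[OF mobperm] .
    have i1: "inj_on \<tau> Z"
    proof (rule inj_onI)
      fix x y assume "x \<in> Z" "y \<in> Z" "\<tau> x = \<tau> y"
      then have "mob a b c d x = mob a b c d y" by (simp add: \<tau>_def)
      then show "x = y" using im by (simp add: inj_eq)
    qed
    have i2: "\<tau> ` Z \<subseteq> Z" using mobZ by (auto simp: \<tau>_def)
    have "\<tau> ` Z = Z" by (rule endo_inj_surj[OF finZ i2 i1])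
    then show "bij_betw \<tau> Z Z" using i1 by (simp add: bij_betw_def)
  next
    fix x assume "x \<notin> Z" then show "\<tau> x = x" by (simp add: \<tau>_def)
  qed
  have L: "(\<lambda>(z, t::'k). (\<tau> z, t)) permutes (Z \<times> UNIV) \<and> evenperm (\<lambda>(z, t::'k). (\<tau> z, t))"
    using lift_even[OF finZ \<tau>perm card_even] .
  have Aperm: "\<forall>z\<in>Z. A z permutes UNIV \<and> evenperm (A z)"
  proof
    fix z assume "z \<in> Z"
    have "lm / mu z \<noteq> 0" using lnz mu[of z] by simp
    then show "A z permutes UNIV \<and> evenperm (A z)"
      using affine_perm_even[of "lm / mu z" "(e * fst (rep z) + f * snd (rep z)) / mu z"]
      by (simp add: A_def[abs_def])
  qed
  have Fb: "(\<lambda>(z, t). if z \<in> Z then (z, A z t) else (z, t)) permutes (Z \<times> UNIV) \<and>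
         evenperm (\<lambda>(z, t). if z \<in> Z then (z, A z t) else (z, t))"
    using fib_even[OF finZ Aperm] .
  have pdec: "p = (\<lambda>(z, t::'k). (\<tau> z, t)) \<circ> (\<lambda>(z, t). if z \<in> Z then (z, A z t) else (z, t))"
    by (auto simp: fun_eq_iff p_def \<tau>_def)
  have finZU: "finite (Z \<times> (UNIV :: 'k set))" by simp
  have "evenperm p"
    unfolding pdec
    using evenperm_comp[OF perm_of_permutes[OF conjunct1[OF L] finZU] perm_of_permutes[OF conjunct1[OF Fb] finZU]]
      L Fb by simp
  then have ev: "evenperm g" using tr by simp
  have "card (conic_points Q) = Suc (card S)"
    unfolding X using p3notin card_image[OF injS] finS by simp
  moreover have "card S = card Z * CARD('k)" by (simp add: S_def card_cartesian_product)
  ultimately have "odd (card (conic_points Q))" using card_even by simp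
  then show ?thesis using ev by simp
qed

end


context c2f begin

lemma conic_main:
  fixes Q :: "'k^3 \<Rightarrow> 'k" and M :: "'k^3^3"
  assumes qc: "is_conic Q" and iso: "conic_iso Q Q M"
  shows "(\<lambda>P. if P \<in> conic_points Q then (\<lambda>v. M *v v) ` P else P) permutes conic_points Q
    \<and> odd (card (conic_points Q))
    \<and> evenperm (\<lambda>P. if P \<in> conic_points Q then (\<lambda>v. M *v v) ` P else P)"
proof -
  define g where "g = (\<lambda>P. if P \<in> conic_points Q then (\<lambda>v. M *v v) ` P else P)"
  have qf: "is_quadratic_form Q" and Qnz: "Q \<noteq> (\<lambda>_. 0)" using qc by (auto simp: is_conic_def)
  obtain \<kappa> where M: "invertible M" "\<kappa> \<noteq> 0" "\<forall>v. Q (M *v v) = \<kappa> * Q v"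
    using iso unfolding conic_iso_def by blast
  have gp: "g permutes conic_points Q"
  proof (rule bij_imp_permutes)
    have "bij_betw (\<lambda>P. (\<lambda>v. M *v v) ` P) (conic_points Q) (conic_points Q)"
      by (rule conic_iso_bij[OF qf qf iso])
    then show "bij_betw g (conic_points Q) (conic_points Q)"
      by (rule bij_betw_cong[THEN iffD1, rotated]) (simp add: g_def)
  next
    fix x assume "x \<notin> conic_points Q" then show "g x = x" by (simp add: g_def)
  qed
  have gdef: "\<forall>P\<in>conic_points Q. g P = (\<lambda>v. M *v v) ` P" by (simp add: g_def)
  obtain a11 a22 a33 a12 a13 a23 where Qp: "Q = poly6 a11 a22 a33 a12 a13 a23"
    using qf6[OF qf] by blast
  define r where "r = nuc a12 a13 a23"
  have cq: "odd (card (conic_points Q)) \<and> evenperm g"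
  proof (cases "r = 0")
    case True
    have n0: "nuc a12 a13 a23 = 0" using True r_def by simp
    obtain s :: "'k^3" where s0: "\<forall>v. poly6 a11 a22 a33 a12 a13 a23 v = (s$1 * v$1 + s$2 * v$2 + s$3 * v$3) * (s$1 * v$1 + s$2 * v$2 + s$3 * v$3)"
      using zero_nuc_square[OF n0] by blast
    have s: "\<forall>v. Q v = (s$1 * v$1 + s$2 * v$2 + s$3 * v$3) * (s$1 * v$1 + s$2 * v$2 + s$3 * v$3)"
      using s0 Qp by simp
    have Qs: "\<forall>v. Q v = lf s v * lf s v" using s by (simp add: lf_def)
    have snz: "s \<noteq> 0"
    proof
      assume "s = 0" then have "Q = (\<lambda>_. 0)" using Qs by (auto simp: fun_eq_iff lf_def)
      then show False using Qnz by simp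
    qed
    obtain u1 u2 u3 l1 l2 where fr: "frame u1 u2 u3 l1 l2 s" using frame_lin[OF snz] by blast
    have "card (conic_points Q) = CARD('k) + 1 \<and> evenperm g"
      by (rule caseA[OF fr Qs M(1) M(3) gp gdef])
    then show ?thesis using card_even by simp
  next
    case False
    obtain u1 u2 l1 l2 l3 where fr: "frame u1 u2 r l1 l2 l3" using frame_nuc[OF False] by blast
    interpret F: fr u1 u2 r l1 l2 l3 using fr by (rule fr.intro)
    have bfr: "bf Q u r = 0" for u
      using bf_nuc[of a11 a22 a33 a12 a13 a23 u] bf_sym[of a11 a22 a33 a12 a13 a23] Qp r_def by metis
    have Qc: "\<forall>x y z. Q (comb u1 u2 r x y z) = Q u1*x*x + Q u2*y*y + bf Q u1 u2*x*y + Q r*z*z"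
      using Q_comb[of a11 a22 a33 a12 a13 a23 u1 u2 r] Qp bfr by (simp add: algebra_simps)
    have bfM: "bf Q (M *v u) (M *v v) = \<kappa> * bf Q u v" for u v
    proof -
      have "M *v u + M *v v = M *v (u + v)" by (simp add: matrix_vector_right_distrib)
      then have "bf Q (M *v u) (M *v v) = Q (M *v (u + v)) - Q (M *v u) - Q (M *v v)"
        unfolding bf_def by simp
      also have "\<dots> = \<kappa> * (Q (u + v) - Q u - Q v)" using M(3) by (simp add: distrib_left)
      finally show ?thesis unfolding bf_def .
    qed
    obtain M' where M': "M ** M' = mat 1" using M(1) unfolding invertible_def by blast
    have "\<forall>v. bf Q (M *v r) v = 0"
    proof
      fix v
      have "v = M *v (M' *v v)" by (simp add: matrix_vector_mul_assoc M')
      then have "bf Q (M *v r) v = \<kappa> * bf Q r (M' *v v)" using bfM by metis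
      then show "bf Q (M *v r) v = 0" using bf_nuc Qp r_def by simp
    qed
    then obtain lm where Mr: "M *v r = lm *s r"
      using radical_nuc[of a12 a13 a23 a11 a22 a33 "M *v r"] False Qp r_def by blast
    show ?thesis
    proof (cases "Q r = 0")
      case True
      have Qc': "\<forall>x y z. Q (comb u1 u2 r x y z) = Q u1*x*x + Q u2*y*y + bf Q u1 u2*x*y"
        using Qc True by simp
      show ?thesis by (rule caseC[OF fr Qc' M(1) M(3) Mr gp gdef])
    next
      case False
      have "card (conic_points Q) = CARD('k) + 1 \<and> evenperm g"
        by (rule caseB[OF fr Qc False M(1) M(3) Mr gp gdef])
      then show ?thesis using card_even by simp
    qed
  qed
  show ?thesis using gp cq by (simp add: g_def)
qed

end


lemma card_lt_remove:
  assumes "finite D" "D' \<subseteq> D - {x}" "x \<in> D"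
  shows "card D' < card D"
proof -
  have "card D' \<le> card (D - {x})" using assms by (intro card_mono) auto
  also have "\<dots> < card D" by (rule card_Diff1_less[OF assms(1,3)])
  finally show ?thesis .
qed

lemma fiber_perm:
  assumes "finite A" "g permutes A"
  shows "(\<lambda>x. if fst x = i then (i, g (snd x)) else x) permutes ({i} \<times> A) \<and>
         evenperm (\<lambda>x. if fst x = i then (i, g (snd x)) else x) = evenperm g"
proof -
  define \<rho> where "\<rho> = (\<lambda>x. if fst x = i then (i, g (snd x)) else x)"
  define \<rho>' where "\<rho>' = (\<lambda>x. if fst x = i then (i, inv g (snd x)) else x)"
  have gi: "g (inv g y) = y" "inv g (g y) = y" for y
    using assms(2) by (simp_all add: permutes_inverses)
  have "bij \<rho>"
    by (rule o_bij[of \<rho>']) (auto simp: fun_eq_iff \<rho>_def \<rho>'_def gi)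
  moreover have "\<rho> x = x" if "x \<notin> {i} \<times> A" for x
  proof (cases "fst x = i")
    case True
    then have "snd x \<notin> A" using that by (cases x) auto
    then have "g (snd x) = snd x" using assms(2) by (simp add: permutes_def)
    then show ?thesis using True by (cases x) (simp add: \<rho>_def)
  qed (simp add: \<rho>_def)
  ultimately have rp: "\<rho> permutes ({i} \<times> A)" unfolding permutes_def by (auto simp: bij_iff)
  have img: "g ` A \<subseteq> A" using assms(2) by (simp add: permutes_image)
  have out: "\<And>x. x \<notin> A \<Longrightarrow> g x = x" using assms(2) by (simp add: permutes_def)
  have im: "(\<lambda>P. (i, P)) ` A = {i} \<times> A" by auto
  have rp': "\<rho> permutes ((\<lambda>P. (i, P)) ` A)" using rp im by simp
  have inj: "inj_on (\<lambda>P. (i, P)) A" by (auto simp: inj_on_def)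
  have "evenperm \<rho> = evenperm g"
    using transfer_evenperm(2)[OF assms(1) inj img out rp'] by (simp add: \<rho>_def)
  then show ?thesis using rp by (simp add: \<rho>_def)
qed

context c2f begin

lemma main_ind:
  fixes Q :: "'b \<Rightarrow> 'k^3 \<Rightarrow> 'k" and \<sigma> :: "'b \<times> ('k^3) set \<Rightarrow> 'b \<times> ('k^3) set"
  assumes finB: "finite B" and qc: "\<forall>i\<in>B. is_conic (Q i)"
  shows "\<sigma> permutes (Sigma B (\<lambda>i. conic_points (Q i))) \<Longrightarrow> \<tau> permutes B \<Longrightarrow>
    (\<forall>i\<in>B. \<exists>M. conic_iso (Q i) (Q (\<tau> i)) M \<and>
       (\<forall>P\<in>conic_points (Q i). \<sigma> (i, P) = (\<tau> i, (\<lambda>v. M *v v) ` P))) \<Longrightarrow>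
    evenperm \<sigma> = evenperm \<tau>"
proof (induction "card {i\<in>B. \<exists>P\<in>conic_points (Q i). \<sigma> (i, P) \<noteq> (i, P)}" arbitrary: \<sigma> \<tau> rule: less_induct)
  case less
  define F where "F = (\<lambda>i. conic_points (Q i))"
  define S where "S = Sigma B F"
  define D where "D \<sigma>0 = {i\<in>B. \<exists>P\<in>F i. \<sigma>0 (i, P) \<noteq> (i, P)}" for \<sigma>0 :: "'b \<times> ('k^3) set \<Rightarrow> _"
  have sp: "\<sigma> permutes S" using less.prems(1) by (simp add: S_def F_def)
  have tp: "\<tau> permutes B" using less.prems(2) .
  have H: "\<forall>i\<in>B. \<exists>M. conic_iso (Q i) (Q (\<tau> i)) M \<and> (\<forall>P\<in>F i. \<sigma> (i, P) = (\<tau> i, (\<lambda>v. M *v v) ` P))"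
    using less.prems(3) by (simp add: F_def)
  have qf: "is_quadratic_form (Q i)" if "i \<in> B" for i using qc that by (simp add: is_conic_def)
  have oddF: "odd (card (F i))" if "i \<in> B" for i
    using conic_main[OF qc[rule_format, OF that] conic_iso_id] by (simp add: F_def)
  have finF: "finite (F i)" for i by simp
  have neF: "F i \<noteq> {}" if "i \<in> B" for i using oddF[OF that] by auto
  have finS: "finite S" using finB by (simp add: S_def)
  have IH: "evenperm \<sigma>' = evenperm \<tau>'" if "card (D \<sigma>') < card (D \<sigma>)" "\<sigma>' permutes S" "\<tau>' permutes B"
    "\<forall>i\<in>B. \<exists>M. conic_iso (Q i) (Q (\<tau>' i)) M \<and> (\<forall>P\<in>F i. \<sigma>' (i, P) = (\<tau>' i, (\<lambda>v. M *v v) ` P))"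
    for \<sigma>' \<tau>'
    using less.hyps[of \<sigma>' \<tau>'] that by (simp add: D_def F_def S_def)
  have finD: "finite (D \<sigma>0)" for \<sigma>0 using finB by (simp add: D_def)
  show ?case
  proof (cases "D \<sigma> = {}")
    case True
    have s1: "\<sigma> = id"
    proof
      fix x show "\<sigma> x = id x"
      proof (cases "x \<in> S")
        case True
        then obtain i P where x: "x = (i, P)" "i \<in> B" "P \<in> F i" by (auto simp: S_def)
        then show ?thesis using \<open>D \<sigma> = {}\<close> by (auto simp: D_def)
      next
        case False then show ?thesis using sp by (simp add: permutes_not_in)
      qed
    qed
    have t1: "\<tau> = id"
    proof
      fix i show "\<tau> i = id i"
      proof (cases "i \<in> B")
        case True
        then obtain P where P: "P \<in> F i" using neF by blast
        obtain M where "\<sigma> (i, P) = (\<tau> i, (\<lambda>v. M *v v) ` P)" using H True P by blast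
        then show ?thesis using s1 by simp
      next
        case False then show ?thesis using tp by (simp add: permutes_not_in)
      qed
    qed
    show ?thesis using s1 t1 by simp
  next
    case False
    then obtain i where iD: "i \<in> D \<sigma>" by blast
    then have iB: "i \<in> B" by (simp add: D_def)
    obtain Mi where Mi: "conic_iso (Q i) (Q (\<tau> i)) Mi" "\<forall>P\<in>F i. \<sigma> (i, P) = (\<tau> i, (\<lambda>v. Mi *v v) ` P)"
      using H iB by blast
    have tiB: "\<tau> i \<in> B" using tp iB by (simp add: permutes_in_image)
    show ?thesis
    proof (cases "\<tau> i = i")
      case True
      have Mi': "conic_iso (Q i) (Q i) Mi" using Mi(1) True by simp
      obtain M' where M': "conic_iso (Q i) (Q i) M'" "M' ** Mi = mat 1" "Mi ** M' = mat 1"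
        using conic_iso_inv[OF Mi'] by metis
      define g where "g = (\<lambda>P. if P \<in> F i then (\<lambda>v. M' *v v) ` P else P)"
      have g: "g permutes F i" "evenperm g"
        using conic_main[OF qc[rule_format, OF iB] M'(1)] by (simp_all add: g_def F_def)
      define \<rho> where "\<rho> = (\<lambda>x. if fst x = i then (i, g (snd x)) else x)"
      have \<rho>: "\<rho> permutes ({i} \<times> F i)" "evenperm \<rho>"
        using fiber_perm[OF finF g(1), of i] g(2) by (simp_all add: \<rho>_def)
      have \<rho>S: "\<rho> permutes S" by (rule permutes_subset[OF \<rho>(1)]) (use iB in \<open>auto simp: S_def\<close>)
      define \<sigma>' where "\<sigma>' = \<sigma> \<circ> \<rho>"
      have s'p: "\<sigma>' permutes S" unfolding \<sigma>'_def by (rule permutes_compose[OF \<rho>S sp])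
      have gF: "g P \<in> F i" if "P \<in> F i" for P
        using g(1) that by (simp add: permutes_in_image)
      have bk: "(\<lambda>v. Mi *v v) ` ((\<lambda>v. M' *v v) ` P) = P" for P
        by (auto simp: image_image matrix_vector_mul_assoc M'(3))
      have fix_i: "\<sigma>' (i, P) = (i, P)" if "P \<in> F i" for P
        using Mi(2)[rule_format, OF gF[OF that]] True that bk
        by (simp add: \<sigma>'_def \<rho>_def g_def)
      have H': "\<forall>k\<in>B. \<exists>M. conic_iso (Q k) (Q (\<tau> k)) M \<and> (\<forall>P\<in>F k. \<sigma>' (k, P) = (\<tau> k, (\<lambda>v. M *v v) ` P))"
      proof
        fix k assume kB: "k \<in> B"
        show "\<exists>M. conic_iso (Q k) (Q (\<tau> k)) M \<and> (\<forall>P\<in>F k. \<sigma>' (k, P) = (\<tau> k, (\<lambda>v. M *v v) ` P))"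
        proof (cases "k = i")
          case True
          then show ?thesis using fix_i \<open>\<tau> i = i\<close> conic_iso_id[of "Q i"]
            by (intro exI[of _ "mat 1"]) auto
        next
          case False
          then show ?thesis using H kB by (simp add: \<sigma>'_def \<rho>_def)
        qed
      qed
      have "D \<sigma>' \<subseteq> D \<sigma> - {i}"
        using fix_i by (auto simp: D_def \<sigma>'_def \<rho>_def)
      then have "card (D \<sigma>') < card (D \<sigma>)"
        by (rule card_lt_remove[OF finD _ iD])
      then have "evenperm \<sigma>' = evenperm \<tau>" by (rule IH[OF _ s'p tp H'])
      moreover have "evenperm \<sigma>' = evenperm \<sigma>"
        unfolding \<sigma>'_def using evenperm_comp[OF perm_of_permutes[OF sp finS] perm_of_permutes[OF \<rho>S finS]] \<rho>(2)
        by simp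
      ultimately show ?thesis by simp
    next
      case False
      define j where "j = \<tau> i"
      have ji: "j \<noteq> i" using False by (simp add: j_def)
      have jB: "j \<in> B" using tiB by (simp add: j_def)
      obtain Mj where Mj: "conic_iso (Q j) (Q (\<tau> j)) Mj" "\<forall>P\<in>F j. \<sigma> (j, P) = (\<tau> j, (\<lambda>v. Mj *v v) ` P)"
        using H jB by blast
      have bij: "bij_betw (\<lambda>P. (\<lambda>v. Mi *v v) ` P) (F i) (F j)"
        using conic_iso_bij[OF qf[OF iB] qf[OF jB]] Mi(1) by (simp add: F_def j_def)
      define A where "A = {i} \<times> F i"
      define f where "f = (\<lambda>x::'b \<times> ('k^3) set. (j, (\<lambda>v. Mi *v v) ` (snd x)))"
      have finA: "finite A" by (simp add: A_def)
      have injf: "inj_on f A" using bij by (auto simp: A_def f_def inj_on_def bij_betw_def)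
      have im: "(\<lambda>P. (\<lambda>v. Mi *v v) ` P) ` F i = F j" using bij by (simp add: bij_betw_def)
      have "f ` A = (\<lambda>P. (j, P)) ` ((\<lambda>P. (\<lambda>v. Mi *v v) ` P) ` F i)"
        unfolding A_def f_def by force
      then have fA: "f ` A = {j} \<times> F j" unfolding im by auto
      have disj: "f ` A \<inter> A = {}" unfolding fA using ji by (auto simp: A_def)
      obtain \<psi> where \<psi>: "\<psi> permutes (A \<union> f ` A)" "evenperm \<psi> = even (card A)"
        "\<forall>x\<in>A. \<psi> x = f x \<and> \<psi> (f x) = x" using swap_pairs[OF finA injf disj] by blast
      have cA: "card A = card (F i)" by (simp add: A_def card_cartesian_product)
      have \<psi>odd: "\<not> evenperm \<psi>" using \<psi>(2) cA oddF[OF iB] by simp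
      have \<psi>S: "\<psi> permutes S"
      proof (rule permutes_subset[OF \<psi>(1)])
        show "A \<union> f ` A \<subseteq> S" unfolding fA using iB jB by (auto simp: A_def S_def)
      qed
      define \<sigma>' where "\<sigma>' = \<sigma> \<circ> \<psi>"
      define \<tau>' where "\<tau>' = \<tau> \<circ> Transposition.transpose i j"
      have s'p: "\<sigma>' permutes S" unfolding \<sigma>'_def by (rule permutes_compose[OF \<psi>S sp])
      have t'p: "\<tau>' permutes B" unfolding \<tau>'_def
        by (rule permutes_compose[OF permutes_swap_id tp]) (use iB jB in auto)
      have tj: "\<tau> j \<noteq> j"
      proof
        assume "\<tau> j = j"
        then have "\<tau> j = \<tau> i" by (simp add: j_def)
        then show False using permutes_inj[OF tp] ji by (auto dest: injD)
      qed
      have \<psi>i: "\<psi> (i, P) = (j, (\<lambda>v. Mi *v v) ` P)" if "P \<in> F i" for P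
        using \<psi>(3) that by (simp add: A_def f_def)
      have \<psi>j: "\<psi> (j, (\<lambda>v. Mi *v v) ` P) = (i, P)" if "P \<in> F i" for P
        using \<psi>(3) that by (force simp: A_def f_def)
      have \<psi>o: "\<psi> (k, P) = (k, P)" if "k \<noteq> i" "k \<noteq> j" for k P
        using \<psi>(1) that unfolding fA by (auto simp: permutes_def A_def)
      have fix_j: "\<sigma>' (j, P) = (j, P)" if "P \<in> F j" for P
      proof -
        have "P \<in> (\<lambda>P. (\<lambda>v. Mi *v v) ` P) ` F i" using im that by simp
        then obtain P0 where P0: "P0 \<in> F i" "P = (\<lambda>v. Mi *v v) ` P0" by blast
        show ?thesis using \<psi>j[OF P0(1)] Mi(2) P0 by (simp add: \<sigma>'_def j_def)
      qed
      have H': "\<forall>k\<in>B. \<exists>M. conic_iso (Q k) (Q (\<tau>' k)) M \<and> (\<forall>P\<in>F k. \<sigma>' (k, P) = (\<tau>' k, (\<lambda>v. M *v v) ` P))"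
      proof
        fix k assume kB: "k \<in> B"
        show "\<exists>M. conic_iso (Q k) (Q (\<tau>' k)) M \<and> (\<forall>P\<in>F k. \<sigma>' (k, P) = (\<tau>' k, (\<lambda>v. M *v v) ` P))"
        proof (cases "k = i")
          case True
          have "conic_iso (Q i) (Q (\<tau> j)) (Mj ** Mi)"
            using conic_iso_comp[OF Mi(1)[unfolded j_def[symmetric]] Mj(1)] .
          moreover have "\<sigma>' (i, P) = (\<tau> j, (\<lambda>v. (Mj ** Mi) *v v) ` P)" if "P \<in> F i" for P
          proof -
            have "(\<lambda>v. Mi *v v) ` P \<in> F j" using bij that by (auto simp: bij_betw_def)
            then show ?thesis using \<psi>i[OF that] Mj(2)
              by (simp add: \<sigma>'_def image_image matrix_vector_mul_assoc)
          qed
          moreover have "\<tau>' i = \<tau> j" by (simp add: \<tau>'_def)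
          ultimately show ?thesis using True by auto
        next
          case ki: False
          show ?thesis
          proof (cases "k = j")
            case True
            have "\<tau>' j = j" by (simp add: \<tau>'_def j_def)
            then show ?thesis using True fix_j conic_iso_id[of "Q j"]
              by (intro exI[of _ "mat 1"]) auto
          next
            case False
            have "\<tau>' k = \<tau> k" using ki False by (simp add: \<tau>'_def)
            then show ?thesis using H kB \<psi>o[OF ki False] by (simp add: \<sigma>'_def)
          qed
        qed
      qed
      have jD: "j \<in> D \<sigma>"
      proof -
        obtain P where P: "P \<in> F j" using neF[OF jB] by blast
        obtain M where "\<sigma> (j, P) = (\<tau> j, (\<lambda>v. M *v v) ` P)" using H jB P by blast
        then have "\<sigma> (j, P) \<noteq> (j, P)" using tj by simp
        then show ?thesis using jB P unfolding D_def by blast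
      qed
      have "D \<sigma>' \<subseteq> D \<sigma> - {j}"
      proof
        fix k assume k: "k \<in> D \<sigma>'"
        then have kB: "k \<in> B" by (simp add: D_def)
        have "k \<noteq> j" using k fix_j by (auto simp: D_def)
        moreover have "k \<in> D \<sigma>"
        proof (cases "k = i")
          case True then show ?thesis using iD by simp
        next
          case False
          then show ?thesis using k \<psi>o[OF False \<open>k \<noteq> j\<close>] by (auto simp: D_def \<sigma>'_def)
        qed
        ultimately show "k \<in> D \<sigma> - {j}" by simp
      qed
      then have "card (D \<sigma>') < card (D \<sigma>)"
        by (rule card_lt_remove[OF finD _ jD])
      then have ev': "evenperm \<sigma>' = evenperm \<tau>'" by (rule IH[OF _ s'p t'p H'])
      have "evenperm \<sigma>' = (\<not> evenperm \<sigma>)"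
        unfolding \<sigma>'_def using evenperm_comp[OF perm_of_permutes[OF sp finS] perm_of_permutes[OF \<psi>S finS]] \<psi>odd
        by simp
      moreover have "evenperm \<tau>' = (\<not> evenperm \<tau>)"
        unfolding \<tau>'_def using evenperm_comp[OF perm_of_permutes[OF tp finB] permutation_swap_id] ji
        by (simp add: evenperm_swap)
      ultimately show ?thesis using ev' by simp
    qed
  qed
qed

end


theorem lemma3p16:
  fixes m :: nat and B :: "'b set" and Q :: "'b \<Rightarrow> ('k::{field,finite})^3 \<Rightarrow> 'k"
    and \<sigma> :: "'b \<times> ('k^3) set \<Rightarrow> 'b \<times> ('k^3) set"
  assumes "CARD('k) = 2 ^ m" and "2 ^ m \<ge> (4::nat)"
    and "finite B"
    and "\<forall>i\<in>B. is_conic (Q i)"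
    and "\<sigma> permutes (Sigma B (\<lambda>i. conic_points (Q i)))"
    and "\<forall>i\<in>B. \<exists>j\<in>B. \<sigma> ` ({i} \<times> conic_points (Q i)) = {j} \<times> conic_points (Q j)"
    and "\<forall>i\<in>B. \<forall>j\<in>B. \<sigma> ` ({i} \<times> conic_points (Q i)) = {j} \<times> conic_points (Q j) \<longrightarrow>
           (\<exists>M. conic_iso (Q i) (Q j) M \<and>
                (\<forall>P\<in>conic_points (Q i). \<sigma> (i, P) = (j, (\<lambda>v. M *v v) ` P)))"
  shows "evenperm \<sigma> = evenperm (induced_perm B Q \<sigma>)"
proof -
  have two: "(1::'k) + 1 = 0" using char2_from_card[OF assms(1,2)] .
  have four: "4 dvd CARD('k)" using four_dvd_card[OF assms(1,2)] .
  interpret c2f "TYPE('k)" using two four by unfold_locales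
  define F where "F = (\<lambda>i. conic_points (Q i))"
  define \<tau> where "\<tau> = induced_perm B Q \<sigma>"
  have neF: "F i \<noteq> {}" if "i \<in> B" for i
    using conic_main[OF assms(4)[rule_format, OF that] conic_iso_id] by (auto simp: F_def)
  have tj: "\<tau> i = j \<and> \<sigma> ` ({i} \<times> F i) = {j} \<times> F j"
    if "i \<in> B" "j \<in> B" "\<sigma> ` ({i} \<times> F i) = {j} \<times> F j" for i j
  proof -
    have "(SOME P. P \<in> F i) \<in> F i" using neF[OF that(1)] by (simp add: some_in_eq)
    then have "\<sigma> (i, SOME P. P \<in> F i) \<in> {j} \<times> F j" using that(3) by blast
    then have "fst (\<sigma> (i, SOME P. P \<in> F i)) = j" by (simp add: mem_Times_iff)
    then show ?thesis using that by (simp add: \<tau>_def induced_perm_def F_def)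
  qed
  have H: "\<forall>i\<in>B. \<tau> i \<in> B \<and> \<sigma> ` ({i} \<times> F i) = {\<tau> i} \<times> F (\<tau> i)"
  proof
    fix i assume iB: "i \<in> B"
    obtain j where "j \<in> B" "\<sigma> ` ({i} \<times> F i) = {j} \<times> F j" using assms(6) iB by (auto simp: F_def)
    then show "\<tau> i \<in> B \<and> \<sigma> ` ({i} \<times> F i) = {\<tau> i} \<times> F (\<tau> i)" using tj iB by blast
  qed
  have tp: "\<tau> permutes B"
  proof (rule bij_imp_permutes)
    have inj: "inj_on \<tau> B"
    proof (rule inj_onI)
      fix i i' assume ii: "i \<in> B" "i' \<in> B" "\<tau> i = \<tau> i'"
      then have "\<sigma> ` ({i} \<times> F i) = \<sigma> ` ({i'} \<times> F i')" using H by metis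
      moreover have "inj \<sigma>" using assms(5) by (rule permutes_inj)
      ultimately have "{i} \<times> F i = {i'} \<times> F i'" by (simp add: inj_image_eq_iff)
      then show "i = i'" using neF[OF ii(1)] by auto
    qed
    have "\<tau> ` B \<subseteq> B" using H by auto
    then have "\<tau> ` B = B" using endo_inj_surj[OF assms(3) _ inj] by simp
    then show "bij_betw \<tau> B B" using inj by (simp add: bij_betw_def)
  next
    fix x assume "x \<notin> B" then show "\<tau> x = x" by (simp add: \<tau>_def induced_perm_def)
  qed
  have Inv: "\<forall>i\<in>B. \<exists>M. conic_iso (Q i) (Q (\<tau> i)) M \<and>
       (\<forall>P\<in>conic_points (Q i). \<sigma> (i, P) = (\<tau> i, (\<lambda>v. M *v v) ` P))"
  proof
    fix i assume iB: "i \<in> B"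
    have "\<tau> i \<in> B" "\<sigma> ` ({i} \<times> F i) = {\<tau> i} \<times> F (\<tau> i)" using H iB by auto
    then show "\<exists>M. conic_iso (Q i) (Q (\<tau> i)) M \<and>
       (\<forall>P\<in>conic_points (Q i). \<sigma> (i, P) = (\<tau> i, (\<lambda>v. M *v v) ` P))"
      using assms(7) iB by (simp add: F_def)
  qed
  show ?thesis using main_ind[OF assms(3,4) assms(5) tp Inv] by (simp add: \<tau>_def)
qed


end
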